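(* Let $k$ be a positive integer and $T$ a tree that is not a path, such that $T$ has no vertex of degree two and no major vertex of terminal degree zero. Then: $O_{R,k}(T)=\mathcal{B}$ if $|M_4(T)|\ge1$ or $|M_3(T)|\ge2$ (for all $k\ge1$), or if $M_4(T)=\emptyset$, $|M_3(T)|=1$, $|M_2(T)|\ge2$ and $k=1$, or if $M_4(T)=M_3(T)=\emptyset$, $|M_2(T)|\ge4$ and $k=1$; $O_{R,k}(T)=\mathcal{N}$ if $M_4(T)=\emptyset$, $|M_3(T)|=1$, $|M_2(T)|\in\{0,1\}$ and $k=1$, or if $M_4(T)=\emptyset$ and $|M_3(T)|=1$ and $k\ge2$, or if $M_4(T)=M_3(T)=\emptyset$, $|M_2(T)|=3$ and $k=1$; $O_{R,k}(T)=\mathcal{M}$ if $M_4(T)=M_3(T)=\emptyset$, $|M_2(T)|=2$ and $k=1$, or if $M_4(T)=M_3(T)=\emptyset$, $M_2(T)\ne\emptyset$ and $k\ge2$.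
   Context: A major vertex is a vertex of degree at least $3$; a leaf has degree $1$. In a tree $T$, a leaf $\ell$ is a terminal vertex of a major vertex $v$ if $d(\ell,v)<d(\ell,w)$ for every other major vertex $w$. The terminal degree $ter_T(v)$ of a major vertex $v$ is its number of terminal vertices; an exterior major vertex is a major vertex of positive terminal degree. $M(T)$ is the set of exterior major vertices; $M_i(T)=\{w\in M(T):ter_T(w)=i\}$ for $i=1,2,3$, and $M_4(T)=\{w\in M(T):ter_T(w)\ge4\}$. $d$ is the shortest-path distance and $d_k(x,y)=\min\{d(x,y),k+1\}$; a set $S$ is a distance-$k$ resolving set if for all distinct $x,y$ some $z\in S$ has $d_k(x,z)\ne d_k(y,z)$. In the Maker-Breaker distance-$k$ resolving game, Maker and Breaker alternately select a not-yet-chosen vertex; Maker wins if his selected vertices form a distance-$k$ resolving set, Breaker wins otherwise. $O_{R,k}(T)=\mathcal{M}$ if Maker has a winning strategy whether he moves first or second, $\mathcal{B}$ if Breaker has a winning strategy whether she moves first or second, $\mathcal{N}$ if the first player has a winning strategy. *)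

theory Defs
  imports Main
begin

definition simple_graph :: "'a set \<Rightarrow> ('a \<Rightarrow> 'a \<Rightarrow> bool) \<Rightarrow> bool" where
  "simple_graph V E \<longleftrightarrow> finite V \<and> (\<forall>u v. E u v \<longrightarrow> u \<in> V \<and> v \<in> V)
     \<and> (\<forall>u v. E u v \<longrightarrow> E v u) \<and> (\<forall>u. \<not> E u u)"

definition walk :: "'a set \<Rightarrow> ('a \<Rightarrow> 'a \<Rightarrow> bool) \<Rightarrow> 'a list \<Rightarrow> bool" where
  "walk V E p \<longleftrightarrow> p \<noteq> [] \<and> set p \<subseteq> V \<and> (\<forall>i. Suc i < length p \<longrightarrow> E (p ! i) (p ! Suc i))"

definition connected_graph :: "'a set \<Rightarrow> ('a \<Rightarrow> 'a \<Rightarrow> bool) \<Rightarrow> bool" where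
  "connected_graph V E \<longleftrightarrow> V \<noteq> {} \<and>
     (\<forall>u\<in>V. \<forall>v\<in>V. \<exists>p. walk V E p \<and> hd p = u \<and> last p = v)"

definition has_cycle :: "'a set \<Rightarrow> ('a \<Rightarrow> 'a \<Rightarrow> bool) \<Rightarrow> bool" where
  "has_cycle V E \<longleftrightarrow> (\<exists>p. walk V E p \<and> distinct p \<and> length p \<ge> 3 \<and> E (last p) (hd p))"

definition tree :: "'a set \<Rightarrow> ('a \<Rightarrow> 'a \<Rightarrow> bool) \<Rightarrow> bool" where
  "tree V E \<longleftrightarrow> simple_graph V E \<and> connected_graph V E \<and> \<not> has_cycle V E"

definition is_path_graph :: "'a set \<Rightarrow> ('a \<Rightarrow> 'a \<Rightarrow> bool) \<Rightarrow> bool" where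
  "is_path_graph V E \<longleftrightarrow> (\<exists>ps. distinct ps \<and> set ps = V \<and>
     (\<forall>u v. E u v \<longleftrightarrow> (\<exists>i. Suc i < length ps \<and> {u, v} = {ps ! i, ps ! Suc i})))"

definition degree :: "'a set \<Rightarrow> ('a \<Rightarrow> 'a \<Rightarrow> bool) \<Rightarrow> 'a \<Rightarrow> nat" where
  "degree V E v = card {u \<in> V. E v u}"

definition gdist :: "'a set \<Rightarrow> ('a \<Rightarrow> 'a \<Rightarrow> bool) \<Rightarrow> 'a \<Rightarrow> 'a \<Rightarrow> nat" where
  "gdist V E u v = (LEAST n. \<exists>p. walk V E p \<and> hd p = u \<and> last p = v \<and> length p = Suc n)"

definition dist_k :: "'a set \<Rightarrow> ('a \<Rightarrow> 'a \<Rightarrow> bool) \<Rightarrow> nat \<Rightarrow> 'a \<Rightarrow> 'a \<Rightarrow> nat" where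
  "dist_k V E k x y = min (gdist V E x y) (k + 1)"

definition major :: "'a set \<Rightarrow> ('a \<Rightarrow> 'a \<Rightarrow> bool) \<Rightarrow> 'a \<Rightarrow> bool" where
  "major V E v \<longleftrightarrow> v \<in> V \<and> degree V E v \<ge> 3"

definition leaf :: "'a set \<Rightarrow> ('a \<Rightarrow> 'a \<Rightarrow> bool) \<Rightarrow> 'a \<Rightarrow> bool" where
  "leaf V E v \<longleftrightarrow> v \<in> V \<and> degree V E v = 1"

definition terminal_of :: "'a set \<Rightarrow> ('a \<Rightarrow> 'a \<Rightarrow> bool) \<Rightarrow> 'a \<Rightarrow> 'a \<Rightarrow> bool" where
  "terminal_of V E v l \<longleftrightarrow> major V E v \<and> leaf V E l \<and>
     (\<forall>w. major V E w \<and> w \<noteq> v \<longrightarrow> gdist V E l v < gdist V E l w)"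

definition ter :: "'a set \<Rightarrow> ('a \<Rightarrow> 'a \<Rightarrow> bool) \<Rightarrow> 'a \<Rightarrow> nat" where
  "ter V E v = card {l. terminal_of V E v l}"

definition ext_major :: "'a set \<Rightarrow> ('a \<Rightarrow> 'a \<Rightarrow> bool) \<Rightarrow> 'a set" where
  "ext_major V E = {v. major V E v \<and> ter V E v > 0}"

definition M_i :: "'a set \<Rightarrow> ('a \<Rightarrow> 'a \<Rightarrow> bool) \<Rightarrow> nat \<Rightarrow> 'a set" where
  "M_i V E i = {w \<in> ext_major V E. ter V E w = i}"

definition M_ge4 :: "'a set \<Rightarrow> ('a \<Rightarrow> 'a \<Rightarrow> bool) \<Rightarrow> 'a set" where
  "M_ge4 V E = {w \<in> ext_major V E. ter V E w \<ge> 4}"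

definition dist_k_resolving :: "'a set \<Rightarrow> ('a \<Rightarrow> 'a \<Rightarrow> bool) \<Rightarrow> nat \<Rightarrow> 'a set \<Rightarrow> bool" where
  "dist_k_resolving V E k S \<longleftrightarrow>
     (\<forall>x\<in>V. \<forall>y\<in>V. x \<noteq> y \<longrightarrow> (\<exists>z\<in>S. dist_k V E k x z \<noteq> dist_k V E k y z))"

(* Maker-Breaker distance-k resolving game.
   maker_wins V E k Mk Br mturn: from the position where Maker has claimed Mk, Breaker has
   claimed Br, and it is Maker's turn iff mturn, Maker has a winning strategy. *)
inductive maker_wins :: "'a set \<Rightarrow> ('a \<Rightarrow> 'a \<Rightarrow> bool) \<Rightarrow> nat \<Rightarrow> 'a set \<Rightarrow> 'a set \<Rightarrow> bool \<Rightarrow> bool"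
  for V E k where
  finished: "V - (Mk \<union> Br) = {} \<Longrightarrow> dist_k_resolving V E k Mk \<Longrightarrow> maker_wins V E k Mk Br mt"
| maker_move: "v \<in> V - (Mk \<union> Br) \<Longrightarrow> maker_wins V E k (insert v Mk) Br False
     \<Longrightarrow> maker_wins V E k Mk Br True"
| breaker_move: "V - (Mk \<union> Br) \<noteq> {} \<Longrightarrow>
     (\<forall>v \<in> V - (Mk \<union> Br). maker_wins V E k Mk (insert v Br) True)
     \<Longrightarrow> maker_wins V E k Mk Br False"

datatype outcome = Outcome_M | Outcome_B | Outcome_N | Outcome_P

(* The game is finite and determined, so Breaker has a winning strategy iff Maker has none. *)
definition game_outcome :: "'a set \<Rightarrow> ('a \<Rightarrow> 'a \<Rightarrow> bool) \<Rightarrow> nat \<Rightarrow> outcome" where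
  "game_outcome V E k =
     (let mf = maker_wins V E k {} {} True; ms = maker_wins V E k {} {} False in
      if mf \<and> ms then Outcome_M
      else if \<not> mf \<and> \<not> ms then Outcome_B
      else if mf \<and> \<not> ms then Outcome_N
      else Outcome_P)"

end

theory Submission
  imports Defs
begin

lemma walk_single: "x \<in> V \<Longrightarrow> walk V E [x]"
  by (simp add: walk_def)

lemma walk_Cons:
  assumes "x \<in> V" "walk V E p" "E x (hd p)"
  shows "walk V E (x # p)"
proof -
  have "p \<noteq> []" using assms(2) by (simp add: walk_def)
  show ?thesis unfolding walk_def
  proof (intro conjI allI impI)
    show "x # p \<noteq> []" by simp
    show "set (x # p) \<subseteq> V" using assms by (auto simp: walk_def)
  next
    fix i assume i: "Suc i < length (x # p)"
    show "E ((x # p) ! i) ((x # p) ! Suc i)"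
    proof (cases i)
      case 0 then show ?thesis using assms(3) \<open>p \<noteq> []\<close> by (simp add: hd_conv_nth)
    next
      case (Suc j) then show ?thesis using assms(2) i by (auto simp: walk_def)
    qed
  qed
qed

lemma walk_tl:
  assumes "walk V E (x # p)" "p \<noteq> []"
  shows "walk V E p"
  unfolding walk_def
proof (intro conjI allI impI)
  show "p \<noteq> []" by fact
  show "set p \<subseteq> V" using assms(1) by (simp add: walk_def)
next
  fix i assume "Suc i < length p"
  then have "E ((x#p) ! Suc i) ((x#p) ! Suc (Suc i))" using assms(1) unfolding walk_def by auto
  then show "E (p ! i) (p ! Suc i)" by simp
qed

lemma walk_first_edge:
  assumes "walk V E (x # p)" "p \<noteq> []"
  shows "E x (hd p)"
  using assms unfolding walk_def
  by (metis Suc_less_eq hd_conv_nth length_Cons length_greater_0_conv nth_Cons_0 nth_Cons_Suc zero_less_Suc)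

lemma walk_rev:
  assumes "walk V E p" "\<And>u v. E u v \<Longrightarrow> E v u"
  shows "walk V E (rev p)"
  unfolding walk_def
proof (intro conjI allI impI)
  show "rev p \<noteq> []" using assms by (simp add: walk_def)
  show "set (rev p) \<subseteq> V" using assms by (simp add: walk_def)
next
  fix i assume i: "Suc i < length (rev p)"
  let ?n = "length p"
  have "E (p ! (?n - Suc (Suc i))) (p ! Suc (?n - Suc (Suc i)))"
    using assms(1) i unfolding walk_def by auto
  moreover have "Suc (?n - Suc (Suc i)) = ?n - Suc i" using i by simp
  ultimately have "E (p ! (?n - Suc (Suc i))) (p ! (?n - Suc i))" by simp
  then have "E (p ! (?n - Suc i)) (p ! (?n - Suc (Suc i)))" using assms(2) by blast
  then show "E (rev p ! i) (rev p ! Suc i)" using i by (simp add: rev_nth)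
qed

locale hig =
  fixes V :: "'a set" and E :: "'a \<Rightarrow> 'a \<Rightarrow> bool"
  assumes sg: "simple_graph V E" and conn: "connected_graph V E"
    and np: "\<not> is_path_graph V E" and nd2: "\<forall>v\<in>V. degree V E v \<noteq> 2"
begin

lemma finV: "finite V" using sg by (simp add: simple_graph_def)
lemma EV: "E u v \<Longrightarrow> u \<in> V \<and> v \<in> V" using sg by (simp add: simple_graph_def)
lemma Esym: "E u v \<Longrightarrow> E v u" using sg by (simp add: simple_graph_def)
lemma Eirr: "\<not> E u u" using sg by (simp add: simple_graph_def)

abbreviation d where "d \<equiv> gdist V E"

lemma gdist_ex:
  assumes "u \<in> V" "v \<in> V"
  shows "\<exists>p. walk V E p \<and> hd p = u \<and> last p = v \<and> length p = Suc (d u v)"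
proof -
  obtain p where p: "walk V E p" "hd p = u" "last p = v"
    using conn assms unfolding connected_graph_def by blast
  then have "length p = Suc (length p - 1)" by (cases p) (auto simp: walk_def)
  with p have "\<exists>n p. walk V E p \<and> hd p = u \<and> last p = v \<and> length p = Suc n" by blast
  then show ?thesis unfolding gdist_def by (rule LeastI_ex)
qed

lemma gdist_le:
  assumes "walk V E p" "hd p = u" "last p = v" "length p = Suc n"
  shows "d u v \<le> n"
  unfolding gdist_def using assms by (intro Least_le) blast

lemma gdist_refl: "u \<in> V \<Longrightarrow> d u u = 0"
  using gdist_le[of "[u]" u u 0] walk_single[of u V E] by simp

lemma gdist_0: assumes "u \<in> V" "v \<in> V" "d u v = 0" shows "u = v"
proof -
  obtain p where "walk V E p" "hd p = u" "last p = v" "length p = Suc 0"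
    using gdist_ex[OF assms(1,2)] assms(3) by auto
  then show ?thesis by (cases p) auto
qed

lemma gdist_edge: assumes "E u v" shows "d u v = 1"
proof -
  have uv: "u \<in> V" "v \<in> V" using EV assms by auto
  have w: "walk V E [u, v]" using walk_Cons[where x=u and V=V and p="[v]" and E=E] walk_single[of v V E] uv assms by simp
  have "d u v \<le> 1" using gdist_le[OF w] by simp
  moreover have "d u v \<noteq> 0" using gdist_0[OF uv] Eirr assms by metis
  ultimately show ?thesis by simp
qed

lemma gdist_1: assumes "u \<in> V" "v \<in> V" "d u v = 1" shows "E u v"
proof -
  obtain p where p: "walk V E p" "hd p = u" "last p = v" "length p = Suc (Suc 0)"
    using gdist_ex[OF assms(1,2)] assms(3) by auto
  then obtain a b where "p = [a, b]" by (cases p; cases "tl p") auto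
  then show ?thesis using p walk_first_edge[of V E a "[b]"] by simp
qed

lemma gdist_ge2: assumes "u \<in> V" "v \<in> V" "u \<noteq> v" "\<not> E u v" shows "d u v \<ge> 2"
  using gdist_0[OF assms(1,2)] gdist_1[OF assms(1,2)] assms(3,4) by linarith

lemma gdist_sym: assumes "u \<in> V" "v \<in> V" shows "d u v = d v u"
proof -
  have le: "d x y \<le> d y x" if xV: "x \<in> V" and yV: "y \<in> V" for x y
  proof -
    obtain p where p: "walk V E p" "hd p = y" "last p = x" "length p = Suc (d y x)"
      using gdist_ex[OF yV xV] by blast
    have "walk V E (rev p)" using walk_rev[OF p(1)] Esym by blast
    moreover have "p \<noteq> []" using p by auto
    ultimately show ?thesis using p gdist_le[of "rev p" x y "d y x"]
      by (simp add: hd_rev last_rev)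
  qed
  show ?thesis using le[OF assms] le[OF assms(2,1)] by simp
qed

end

context hig begin

lemma nbrs_fin: "finite {u \<in> V. E x u}" using finV by simp

lemma Vne: "V \<noteq> {}" using conn by (simp add: connected_graph_def)

lemma not_single: "x \<in> V \<Longrightarrow> \<exists>y\<in>V. y \<noteq> x"
proof (rule ccontr)
  assume x: "x \<in> V" and "\<not> (\<exists>y\<in>V. y \<noteq> x)"
  then have V: "V = {x}" by blast
  have noE: "\<not> E u w" for u w
  proof
    assume "E u w"
    then have "u = x" "w = x" using EV[of u w] V by blast+
    then show False using \<open>E u w\<close> Eirr by simp
  qed
  have "is_path_graph V E" unfolding is_path_graph_def
    by (rule exI[of _ "[x]"]) (simp add: V noE)
  then show False using np by simp
qed

lemma has_nbr: assumes "x \<in> V" shows "\<exists>y. E x y"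
proof -
  obtain y where y: "y \<in> V" "y \<noteq> x" using not_single assms by blast
  obtain p where p: "walk V E p" "hd p = x" "last p = y" "length p = Suc (d x y)"
    using gdist_ex[OF assms y(1)] by blast
  obtain a q where pq: "p = a # q" using p by (cases p) auto
  have "q \<noteq> []" using pq p y by auto
  then show ?thesis using walk_first_edge[of V E a q] p pq by auto
qed

lemma degree_pos: assumes "x \<in> V" shows "degree V E x \<ge> 1"
proof -
  obtain y where y: "E x y" using has_nbr[OF assms] by blast
  then have "y \<in> {u \<in> V. E x u}" using EV[OF y] by simp
  then have "card {u \<in> V. E x u} > 0" using nbrs_fin[of x] card_gt_0_iff by blast
  then show ?thesis unfolding degree_def by simp
qed

lemma vertex_cases: assumes "x \<in> V" shows "leaf V E x \<or> major V E x"
proof -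
  have "degree V E x \<ge> 1" "degree V E x \<noteq> 2" using degree_pos[OF assms] nd2 assms by auto
  then have "degree V E x = 1 \<or> degree V E x \<ge> 3" by linarith
  then show ?thesis unfolding leaf_def major_def using assms by blast
qed

lemma leaf_not_major: "leaf V E x \<Longrightarrow> \<not> major V E x"
  unfolding leaf_def major_def by simp

lemma leaf_nbr_set: assumes "leaf V E l" "E l v" shows "{u \<in> V. E l u} = {v}"
proof -
  have "card {u \<in> V. E l u} = 1" using assms by (simp add: leaf_def degree_def)
  then obtain a where a: "{u \<in> V. E l u} = {a}" by (rule card_1_singletonE)
  have "v \<in> {u \<in> V. E l u}" using assms(2) EV[OF assms(2)] by simp
  then show ?thesis using a by auto
qed

lemma leaf_uniq: "leaf V E l \<Longrightarrow> E l v \<Longrightarrow> E l w \<Longrightarrow> v = w"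
proof -
  assume a: "leaf V E l" "E l v" "E l w"
  have "w \<in> {u \<in> V. E l u}" using a(3) EV[OF a(3)] by simp
  then show "v = w" using leaf_nbr_set[OF a(1,2)] by simp
qed

lemma leaf_major: assumes l: "leaf V E l" and lv: "E l v" shows "major V E v"
proof -
  have vV: "v \<in> V" and lV: "l \<in> V" using EV[OF lv] by auto
  have "degree V E v \<noteq> 1"
  proof
    assume dv: "degree V E v = 1"
    then have vl: "leaf V E v" using vV by (simp add: leaf_def)
    have nl: "\<And>u. E l u \<Longrightarrow> u = v" using leaf_uniq[OF l] lv by blast
    have nv: "\<And>u. E v u \<Longrightarrow> u = l" using leaf_uniq[OF vl] Esym[OF lv] by blast
    have sub: "V \<subseteq> {l, v}"
    proof
      fix y assume yV: "y \<in> V"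
      obtain p where p: "walk V E p" "hd p = l" "last p = y"
        using gdist_ex[OF lV yV] by blast
      have "\<forall>i < length p. p ! i \<in> {l, v}"
      proof (intro allI impI)
        fix i assume "i < length p"
        then show "p ! i \<in> {l, v}"
        proof (induction i)
          case 0 then show ?case using p by (cases p) auto
        next
          case (Suc i)
          then have "E (p ! i) (p ! Suc i)" using p(1) by (simp add: walk_def)
          moreover have "p ! i \<in> {l, v}" using Suc by simp
          ultimately show ?case using nl nv by auto
        qed
      qed
      moreover have "p \<noteq> []" using p by (simp add: walk_def)
      ultimately show "y \<in> {l, v}" using p(3) by (metis last_conv_nth diff_less length_greater_0_conv zero_less_one)
    qed
    have lnv: "l \<noteq> v" using Eirr[of l] lv by metis
    have "is_path_graph V E" unfolding is_path_graph_def
    proof (rule exI[of _ "[l, v]"], intro conjI allI)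
      show "distinct [l, v]" using lnv by simp
      show "set [l, v] = V" using sub lV vV by auto
    next
      fix a b
      show "E a b = (\<exists>i. Suc i < length [l, v] \<and> {a, b} = {[l, v] ! i, [l, v] ! Suc i})"
      proof
        assume ab: "E a b"
        then have "a \<in> {l, v}" "b \<in> {l, v}" "a \<noteq> b" using EV[OF ab] sub Eirr[of a] by blast+
        then have "{a, b} = {l, v}" by auto
        then show "\<exists>i. Suc i < length [l, v] \<and> {a, b} = {[l, v] ! i, [l, v] ! Suc i}"
          by (intro exI[of _ 0]) simp
      next
        assume "\<exists>i. Suc i < length [l, v] \<and> {a, b} = {[l, v] ! i, [l, v] ! Suc i}"
        then have "{a, b} = {l, v}" by auto
        then have "(a = l \<and> b = v) \<or> (a = v \<and> b = l)" by (auto simp: doubleton_eq_iff)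
        then show "E a b" using lv Esym by auto
      qed
    qed
    then show False using np by simp
  qed
  then show ?thesis using vertex_cases[OF vV] by (auto simp: leaf_def)
qed

lemma leaf_dist:
  assumes l: "leaf V E l" and lv: "E l v" and z: "z \<in> V" "z \<noteq> l"
  shows "d l z = Suc (d v z)"
proof -
  have vV: "v \<in> V" and lV: "l \<in> V" using EV[OF lv] by auto
  obtain p where p: "walk V E p" "hd p = v" "last p = z" "length p = Suc (d v z)"
    using gdist_ex[OF vV z(1)] by blast
  have pne: "p \<noteq> []" using p by auto
  have "walk V E (l # p)" using walk_Cons[OF lV p(1)] p(2) lv by simp
  then have le1: "d l z \<le> Suc (d v z)" using gdist_le[of "l # p" l z] p pne by simp
  obtain q where q: "walk V E q" "hd q = l" "last q = z" "length q = Suc (d l z)"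
    using gdist_ex[OF lV z(1)] by blast
  obtain a r where qr: "q = a # r" using q by (cases q) auto
  have a: "a = l" using q qr by simp
  have rne: "r \<noteq> []" using q qr a z(2) by auto
  have e: "E l (hd r)" using walk_first_edge[of V E a r] q(1) qr a rne by simp
  have hr: "hd r = v" using leaf_uniq[OF l e lv] .
  have "walk V E r" using walk_tl[of V E a r] q(1) qr rne by simp
  then have "d v z \<le> length r - 1" using gdist_le[of r v z "length r - 1"] hr q qr rne by simp
  then have "Suc (d v z) \<le> d l z" using q qr rne by (cases r) auto
  then show ?thesis using le1 by simp
qed

lemma leaf_dist':
  assumes l: "leaf V E l" and lv: "E l v" and z: "z \<in> V" "z \<noteq> l"
  shows "d z l = Suc (d z v)"
proof -
  have vV: "v \<in> V" and lV: "l \<in> V" using EV[OF lv] by auto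
  show ?thesis using leaf_dist[OF assms] gdist_sym[OF z(1) lV] gdist_sym[OF z(1) vV] by simp
qed

end

definition Lv :: "'a set \<Rightarrow> ('a \<Rightarrow> 'a \<Rightarrow> bool) \<Rightarrow> 'a \<Rightarrow> 'a set" where
  "Lv V E v = {l. leaf V E l \<and> E v l}"

definition CC :: "'a set \<Rightarrow> ('a \<Rightarrow> 'a \<Rightarrow> bool) \<Rightarrow> 'a set \<Rightarrow> bool" where
  "CC V E S \<longleftrightarrow> (\<forall>v. major V E v \<longrightarrow> card (Lv V E v - S) \<le> 1 \<and> (v \<in> S \<or> Lv V E v \<inter> S \<noteq> {}))"

lemma sep1: "gdist V E x z < gdist V E y z \<Longrightarrow> gdist V E x z \<le> k \<Longrightarrow> dist_k V E k x z \<noteq> dist_k V E k y z"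
  unfolding dist_k_def by simp
lemma sep2: "gdist V E y z < gdist V E x z \<Longrightarrow> gdist V E y z \<le> k \<Longrightarrow> dist_k V E k x z \<noteq> dist_k V E k y z"
  unfolding dist_k_def by simp

context hig begin

lemma Lv_sub: "Lv V E v \<subseteq> V" unfolding Lv_def leaf_def by auto
lemma Lv_fin: "finite (Lv V E v)" using Lv_sub finV finite_subset by blast

lemma Lv_E: "l \<in> Lv V E v \<Longrightarrow> E v l" unfolding Lv_def by simp
lemma Lv_E': "l \<in> Lv V E v \<Longrightarrow> E l v" unfolding Lv_def using Esym by simp
lemma Lv_leaf: "l \<in> Lv V E v \<Longrightarrow> leaf V E l" unfolding Lv_def by simp

lemma Lv_disj: "l \<in> Lv V E v \<Longrightarrow> l \<in> Lv V E w \<Longrightarrow> v = w"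
  using leaf_uniq Lv_E' Lv_leaf by metis

lemma major_notin_Lv: "major V E w \<Longrightarrow> w \<notin> Lv V E v"
  using Lv_leaf leaf_not_major by blast

lemma major_V: "major V E v \<Longrightarrow> v \<in> V" unfolding major_def by simp
lemma leaf_V: "leaf V E v \<Longrightarrow> v \<in> V" unfolding leaf_def by simp

lemma leaf_anchor: assumes "leaf V E l" obtains v where "major V E v" "l \<in> Lv V E v"
proof -
  obtain v where v: "E l v" using has_nbr leaf_V[OF assms] by blast
  have "major V E v" using leaf_major[OF assms v] .
  moreover have "l \<in> Lv V E v" unfolding Lv_def using assms v Esym by blast
  ultimately show ?thesis using that by blast
qed

lemma belongs: assumes "x \<in> V" obtains u where "major V E u" "x = u \<or> x \<in> Lv V E u"
  using vertex_cases[OF assms] leaf_anchor by metis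

lemma ter_eq: assumes mv: "major V E v" shows "ter V E v = card (Lv V E v)"
proof -
  have "{l. terminal_of V E v l} = Lv V E v"
  proof (intro set_eqI iffI)
    fix l assume "l \<in> {l. terminal_of V E v l}"
    then have t: "terminal_of V E v l" by simp
    then have l: "leaf V E l" and tw: "\<And>w. major V E w \<Longrightarrow> w \<noteq> v \<Longrightarrow> d l v < d l w"
      unfolding terminal_of_def by auto
    obtain u where u: "major V E u" "l \<in> Lv V E u" using leaf_anchor[OF l] by blast
    have "u = v"
    proof (rule ccontr)
      assume "u \<noteq> v"
      then have "d l v < d l u" using tw u(1) by blast
      moreover have "d l u = 1" using gdist_edge[OF Lv_E'[OF u(2)]] .
      ultimately have "d l v = 0" by simp
      then have "l = v" using gdist_0 leaf_V[OF l] major_V[OF mv] by blast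
      then show False using l mv leaf_not_major by blast
    qed
    then show "l \<in> Lv V E v" using u by simp
  next
    fix l assume l: "l \<in> Lv V E v"
    have "terminal_of V E v l" unfolding terminal_of_def
    proof (intro conjI allI impI)
      show "major V E v" by fact
      show "leaf V E l" using Lv_leaf[OF l] .
    next
      fix w assume w: "major V E w \<and> w \<noteq> v"
      have "d l v = 1" using gdist_edge[OF Lv_E'[OF l]] .
      moreover have "d l w \<ge> 2"
      proof (rule gdist_ge2)
        show "l \<in> V" using Lv_sub l by blast
        show "w \<in> V" using major_V w by blast
        show "l \<noteq> w" using w major_notin_Lv l by blast
        show "\<not> E l w" using w l leaf_uniq Lv_leaf Lv_E' by metis
      qed
      ultimately show "d l v < d l w" by simp
    qed
    then show "l \<in> {l. terminal_of V E v l}" by simp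
  qed
  then show ?thesis unfolding ter_def by simp
qed

lemma card2_le1: "finite A \<Longrightarrow> x \<in> A \<Longrightarrow> y \<in> A \<Longrightarrow> x \<noteq> y \<Longrightarrow> card A \<ge> 2"
proof -
  assume a: "finite A" "x \<in> A" "y \<in> A" "x \<noteq> y"
  have "{x, y} \<subseteq> A" using a by blast
  then have "card {x, y} \<le> card A" using a(1) card_mono by blast
  then show ?thesis using a(4) by simp
qed

lemma CC_leaves: assumes "CC V E S" "major V E u" "x \<in> Lv V E u" "y \<in> Lv V E u" "x \<notin> S" "y \<notin> S"
  shows "x = y"
proof (rule ccontr)
  assume "x \<noteq> y"
  then have "card (Lv V E u - S) \<ge> 2" using card2_le1[of "Lv V E u - S" x y] assms Lv_fin by blast
  then show False using assms(1,2) unfolding CC_def by fastforce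
qed

lemma CC_some: assumes "CC V E S" "major V E u" "u \<notin> S" obtains s where "s \<in> S" "s \<in> Lv V E u"
  using assms unfolding CC_def by blast

lemma res_k1:
  assumes k: "k = 1" and S: "S \<subseteq> V" and cc: "CC V E S"
    and eok: "\<forall>x y v w. major V E v \<longrightarrow> major V E w \<longrightarrow> x \<in> Lv V E v \<longrightarrow> y \<in> Lv V E w \<longrightarrow>
      x \<notin> S \<longrightarrow> y \<notin> S \<longrightarrow> v \<notin> S \<longrightarrow> w \<notin> S \<longrightarrow> x = y"
  shows "dist_k_resolving V E k S"
  unfolding dist_k_resolving_def
proof (intro ballI impI)
  fix x y assume xV: "x \<in> V" and yV: "y \<in> V" and xy: "x \<noteq> y"
  show "\<exists>z\<in>S. dist_k V E k x z \<noteq> dist_k V E k y z"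
  proof (cases "x \<in> S \<or> y \<in> S")
    case True
    then show ?thesis
    proof
      assume xS: "x \<in> S"
      have "d x x = 0" using gdist_refl xV by simp
      moreover have "d y x \<noteq> 0" using gdist_0[OF yV xV] xy by metis
      ultimately show ?thesis using xS sep1[of V E x x y k] by (intro bexI[of _ x]) auto
    next
      assume yS: "y \<in> S"
      have "d y y = 0" using gdist_refl yV by simp
      moreover have "d x y \<noteq> 0" using gdist_0[OF xV yV] xy by metis
      ultimately show ?thesis using yS sep2[of V E y y x k] by (intro bexI[of _ y]) auto
    qed
  next
    case False
    then have xS: "x \<notin> S" and yS: "y \<notin> S" by auto
    have key: "\<exists>z\<in>S. E x z \<noteq> E y z"
    proof (rule ccontr)
      assume "\<not> (\<exists>z\<in>S. E x z \<noteq> E y z)"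
      then have same: "\<And>z. z \<in> S \<Longrightarrow> E x z = E y z" by blast
      have notmaj: "\<not> major V E a" if a: "a = x \<or> a = y" for a
      proof
        assume ma: "major V E a"
        have aS: "a \<notin> S" using a xS yS by blast
        obtain s where s: "s \<in> S" "s \<in> Lv V E a" using CC_some[OF cc ma aS] by blast
        have "E x s" "E y s" using same[OF s(1)] Lv_E[OF s(2)] a by auto
        then have "x = y" using leaf_uniq[OF Lv_leaf[OF s(2)]] Esym by metis
        then show False using xy by simp
      qed
      have xl: "leaf V E x" using vertex_cases[OF xV] notmaj by blast
      have yl: "leaf V E y" using vertex_cases[OF yV] notmaj by blast
      obtain u where u: "major V E u" "x \<in> Lv V E u" using leaf_anchor[OF xl] by blast
      obtain w where w: "major V E w" "y \<in> Lv V E w" using leaf_anchor[OF yl] by blast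
      have uS: "u \<notin> S"
      proof
        assume uS: "u \<in> S"
        have "E y u" using same[OF uS] Lv_E'[OF u(2)] by simp
        then have "u \<in> Lv V E u \<or> y \<in> Lv V E u" using yl Esym unfolding Lv_def by blast
        then have "y \<in> Lv V E u" using major_notin_Lv[OF u(1)] by blast
        then show False using CC_leaves[OF cc u(1) u(2) _ xS yS] xy by blast
      qed
      have wS: "w \<notin> S"
      proof
        assume wS: "w \<in> S"
        have "E x w" using same[OF wS] Lv_E'[OF w(2)] by simp
        then have "x \<in> Lv V E w" using xl Esym unfolding Lv_def by blast
        then show False using CC_leaves[OF cc w(1) _ w(2) xS yS] xy by blast
      qed
      show False using eok u(1) w(1) u(2) w(2) xS yS uS wS xy by blast
    qed
    then obtain z where zS: "z \<in> S" and ne: "E x z \<noteq> E y z" by blast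
    have zV: "z \<in> V" using zS S by blast
    show ?thesis
    proof (cases "E x z")
      case True
      then have "\<not> E y z" using ne by simp
      moreover have "y \<noteq> z" using zS yS by blast
      ultimately have "d y z \<ge> 2" using gdist_ge2[OF yV zV] by blast
      moreover have "d x z = 1" using gdist_edge[OF True] .
      ultimately show ?thesis using zS sep1[of V E x z y k] k by (intro bexI[of _ z]) auto
    next
      case False
      then have "E y z" using ne by simp
      moreover have "x \<noteq> z" using zS xS by blast
      ultimately have "d x z \<ge> 2" using gdist_ge2[OF xV zV] False by blast
      moreover have "d y z = 1" using gdist_edge[OF \<open>E y z\<close>] .
      ultimately show ?thesis using zS sep2[of V E y z x k] k by (intro bexI[of _ z]) auto
    qed
  qed
qed

end

context hig begin

lemma majors_dist_pos: "major V E u \<Longrightarrow> major V E w \<Longrightarrow> u \<noteq> w \<Longrightarrow> d u w \<ge> 1"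
  using gdist_0 major_V by (metis less_one not_le)

lemma res_k2:
  assumes k: "k \<ge> 2" and S: "S \<subseteq> V" and cc: "CC V E S"
  shows "dist_k_resolving V E k S"
  unfolding dist_k_resolving_def
proof (intro ballI impI)
  fix x y assume xV: "x \<in> V" and yV: "y \<in> V" and xy: "x \<noteq> y"
  show "\<exists>z\<in>S. dist_k V E k x z \<noteq> dist_k V E k y z"
  proof (cases "x \<in> S \<or> y \<in> S")
    case True
    then show ?thesis
    proof
      assume xS: "x \<in> S"
      have "d x x = 0" using gdist_refl xV by simp
      moreover have "d y x \<noteq> 0" using gdist_0[OF yV xV] xy by metis
      ultimately show ?thesis using xS sep1[of V E x x y k] by (intro bexI[of _ x]) auto
    next
      assume yS: "y \<in> S"
      have "d y y = 0" using gdist_refl yV by simp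
      moreover have "d x y \<noteq> 0" using gdist_0[OF xV yV] xy by metis
      ultimately show ?thesis using yS sep2[of V E y y x k] by (intro bexI[of _ y]) auto
    qed
  next
    case False
    then have xS: "x \<notin> S" and yS: "y \<notin> S" by auto
    obtain u where u: "major V E u" "x = u \<or> x \<in> Lv V E u" using belongs[OF xV] by blast
    obtain w where w: "major V E w" "y = w \<or> y \<in> Lv V E w" using belongs[OF yV] by blast
    have uV: "u \<in> V" and wV: "w \<in> V" using u w major_V by auto
    show ?thesis
    proof (cases "u = w")
      case True
      have "\<not> (x \<in> Lv V E u \<and> y \<in> Lv V E u)" using CC_leaves[OF cc u(1) _ _ xS yS] xy by blast
      then have "(x = u \<and> y \<in> Lv V E u) \<or> (y = u \<and> x \<in> Lv V E u)" using u w True xy by blast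
      then show ?thesis
      proof
        assume a: "x = u \<and> y \<in> Lv V E u"
        obtain s where s: "s \<in> S" "s \<in> Lv V E u" using CC_some[OF cc u(1)] a xS by blast
        have "d x s = 1" using a gdist_edge[OF Lv_E[OF s(2)]] by simp
        moreover have "d y s = Suc (d u s)" using leaf_dist[OF Lv_leaf[OF conjunct2[OF a]] Lv_E'[OF conjunct2[OF a]]] s S yS by blast
        moreover have "d u s = 1" using gdist_edge[OF Lv_E[OF s(2)]] .
        ultimately show ?thesis using s k sep1[of V E x s y k] by (intro bexI[of _ s]) auto
      next
        assume a: "y = u \<and> x \<in> Lv V E u"
        obtain s where s: "s \<in> S" "s \<in> Lv V E u" using CC_some[OF cc u(1)] a yS by blast
        have "d y s = 1" using a gdist_edge[OF Lv_E[OF s(2)]] by simp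
        moreover have "d x s = Suc (d u s)" using leaf_dist[OF Lv_leaf[OF conjunct2[OF a]] Lv_E'[OF conjunct2[OF a]]] s S xS by blast
        moreover have "d u s = 1" using gdist_edge[OF Lv_E[OF s(2)]] .
        ultimately show ?thesis using s k sep2[of V E y s x k] by (intro bexI[of _ s]) auto
      qed
    next
      case uw: False
      have duw: "d u w \<ge> 1" "d w u \<ge> 1" using majors_dist_pos u(1) w(1) uw by auto
      have yu: "y \<noteq> u" using w uw major_notin_Lv[OF u(1)] by blast
      have xw: "x \<noteq> w" using u uw major_notin_Lv[OF w(1)] by blast
      obtain s where sS: "s \<in> S" and s: "s = u \<or> s \<in> Lv V E u" using cc u(1) unfolding CC_def by blast
      have sV: "s \<in> V" using sS S by blast
      have sy: "s \<noteq> y" using sS yS by blast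
      have sx: "s \<noteq> x" using sS xS by blast
      show ?thesis
      proof (cases "x = u")
        case True
        then have sl: "s \<in> Lv V E u" using s sx by blast
        have "d x s = 1" using True gdist_edge[OF Lv_E[OF sl]] by simp
        moreover have "d y s = Suc (d y u)" using leaf_dist'[OF Lv_leaf[OF sl] Lv_E'[OF sl] yV sy[symmetric]] .
        moreover have "d y u \<ge> 1" using gdist_0[OF yV uV] yu by (metis less_one not_le)
        ultimately show ?thesis using sS k sep1[of V E x s y k] by (intro bexI[of _ s]) auto
      next
        case False
        then have xl: "x \<in> Lv V E u" using u by blast
        have dxu: "d x u = 1" using gdist_edge[OF Lv_E'[OF xl]] .
        have dxs: "d x s = (if s = u then 1 else 2)"
        proof (cases "s = u")
          case True then show ?thesis using dxu by simp
        next
          case False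
          then have sl: "s \<in> Lv V E u" using s by blast
          have "d x s = Suc (d u s)" using leaf_dist[OF Lv_leaf[OF xl] Lv_E'[OF xl] sV sx] .
          then show ?thesis using False gdist_edge[OF Lv_E[OF sl]] by simp
        qed
        have dys: "d y s = (if s = u then d y u else Suc (d y u))"
        proof (cases "s = u")
          case True then show ?thesis by simp
        next
          case False
          then have sl: "s \<in> Lv V E u" using s by blast
          show ?thesis using leaf_dist'[OF Lv_leaf[OF sl] Lv_E'[OF sl] yV sy[symmetric]] False by simp
        qed
        show ?thesis
        proof (cases "d y u \<ge> 2")
          case True
          then have "d x s < d y s" "d x s \<le> k" using dxs dys k by auto
          then show ?thesis using sS sep1[of V E x s y k] by (intro bexI[of _ s]) auto
        next
          case False
          have "y = w"
          proof (rule ccontr)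
            assume "y \<noteq> w"
            then have yl: "y \<in> Lv V E w" using w by blast
            have "d y u = Suc (d w u)" using leaf_dist[OF Lv_leaf[OF yl] Lv_E'[OF yl] uV yu[symmetric]] .
            then show False using False duw by simp
          qed
          obtain s' where s'S: "s' \<in> S" and s'l: "s' \<in> Lv V E w" using CC_some[OF cc w(1)] \<open>y = w\<close> yS by blast
          have s'V: "s' \<in> V" using s'S S by blast
          have s'x: "s' \<noteq> x" using s'S xS by blast
          have "d y s' = 1" using \<open>y = w\<close> gdist_edge[OF Lv_E[OF s'l]] by simp
          moreover have "d x s' = Suc (d u s')" using leaf_dist[OF Lv_leaf[OF xl] Lv_E'[OF xl] s'V s'x] .
          moreover have "d u s' = Suc (d u w)" using leaf_dist'[OF Lv_leaf[OF s'l] Lv_E'[OF s'l] uV] major_notin_Lv[OF u(1)] s'l by blast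
          ultimately have "d y s' < d x s'" "d y s' \<le> k" using k duw by auto
          then show ?thesis using s'S sep2[of V E y s' x k] by (intro bexI[of _ s']) auto
        qed
      qed
    qed
  qed
qed

lemma twins_nonres:
  assumes S: "S \<subseteq> V" and "major V E v" "x \<in> Lv V E v" "y \<in> Lv V E v" "x \<noteq> y" "x \<notin> S" "y \<notin> S"
  shows "\<not> dist_k_resolving V E k S"
proof
  assume r: "dist_k_resolving V E k S"
  have xV: "x \<in> V" and yV: "y \<in> V" using assms Lv_sub by auto
  obtain z where z: "z \<in> S" "dist_k V E k x z \<noteq> dist_k V E k y z"
    using r xV yV assms(5) unfolding dist_k_resolving_def by blast
  have zV: "z \<in> V" using z S by blast
  have "d x z = Suc (d v z)" using leaf_dist[OF Lv_leaf[OF assms(3)] Lv_E'[OF assms(3)] zV] z assms(6) by blast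
  moreover have "d y z = Suc (d v z)" using leaf_dist[OF Lv_leaf[OF assms(4)] Lv_E'[OF assms(4)] zV] z assms(7) by blast
  ultimately show False using z(2) unfolding dist_k_def by simp
qed

lemma empty_nonres:
  assumes k: "k = 1" and S: "S \<subseteq> V" and xV: "x \<in> V" and yV: "y \<in> V" and xy: "x \<noteq> y"
    and "x \<notin> S" "y \<notin> S" and nx: "\<And>z. z \<in> S \<Longrightarrow> \<not> E x z" and ny: "\<And>z. z \<in> S \<Longrightarrow> \<not> E y z"
  shows "\<not> dist_k_resolving V E k S"
proof
  assume r: "dist_k_resolving V E k S"
  obtain z where z: "z \<in> S" "dist_k V E k x z \<noteq> dist_k V E k y z"
    using r xV yV xy unfolding dist_k_resolving_def by blast
  have zV: "z \<in> V" using z S by blast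
  have "d x z \<ge> 2" using gdist_ge2[OF xV zV] nx[OF z(1)] z(1) assms(6) by blast
  moreover have "d y z \<ge> 2" using gdist_ge2[OF yV zV] ny[OF z(1)] z(1) assms(7) by blast
  ultimately show False using z(2) k unfolding dist_k_def by simp
qed

end

definition InvB :: "'a set \<Rightarrow> 'a set set \<Rightarrow> 'a set \<Rightarrow> 'a set \<Rightarrow> 'a set \<Rightarrow> bool" where
  "InvB V Ps B Mk Br \<longleftrightarrow> B \<subseteq> Mk \<and> Mk \<subseteq> V \<and> Br \<subseteq> V \<and> Mk \<inter> Br = {} \<and>
     (\<forall>P\<in>Ps. P \<inter> Mk \<noteq> {} \<or> P \<inter> Br = {})"

lemma card_dec: assumes "finite V" "y \<in> V - A" shows "card (V - insert y A) < card (V - A)"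
proof -
  have "V - insert y A = (V - A) - {y}" by blast
  then show ?thesis using card_Diff1_less[of "V - A" y] assms by simp
qed

locale pairing =
  fixes V :: "'a set" and E :: "'a \<Rightarrow> 'a \<Rightarrow> bool" and k :: nat and Ps :: "'a set set" and B :: "'a set"
  assumes fin: "finite V"
    and Ps: "\<And>P. P \<in> Ps \<Longrightarrow> P \<subseteq> V \<and> card P = 2"
    and disj: "\<And>P Q. P \<in> Ps \<Longrightarrow> Q \<in> Ps \<Longrightarrow> P \<noteq> Q \<Longrightarrow> P \<inter> Q = {}"
    and suff: "\<And>S. B \<subseteq> S \<Longrightarrow> S \<subseteq> V \<Longrightarrow> (\<forall>P\<in>Ps. P \<inter> S \<noteq> {}) \<Longrightarrow> dist_k_resolving V E k S"
begin

lemma end_res: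
  assumes inv: "InvB V Ps B Mk Br" and F: "V - (Mk \<union> Br) = {}"
  shows "dist_k_resolving V E k Mk"
proof (rule suff)
  show "B \<subseteq> Mk" "Mk \<subseteq> V" using inv by (auto simp: InvB_def)
  show "\<forall>P\<in>Ps. P \<inter> Mk \<noteq> {}"
  proof
    fix P assume P: "P \<in> Ps"
    show "P \<inter> Mk \<noteq> {}"
    proof
      assume a: "P \<inter> Mk = {}"
      then have "P \<inter> Br = {}" using inv P by (auto simp: InvB_def)
      then have "P = {}" using a Ps[OF P] F by blast
      then show False using Ps[OF P] by simp
    qed
  qed
qed

lemma end_res2:
  assumes inv: "InvB V Ps B Mk Br" and F: "V - (Mk \<union> insert x Br) = {}"
  shows "dist_k_resolving V E k Mk"
proof (rule suff)
  show "B \<subseteq> Mk" "Mk \<subseteq> V" using inv by (auto simp: InvB_def)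
  show "\<forall>P\<in>Ps. P \<inter> Mk \<noteq> {}"
  proof
    fix P assume P: "P \<in> Ps"
    show "P \<inter> Mk \<noteq> {}"
    proof
      assume a: "P \<inter> Mk = {}"
      then have "P \<inter> Br = {}" using inv P by (auto simp: InvB_def)
      then have "P \<subseteq> {x}" using a Ps[OF P] F by blast
      then have "card P \<le> 1" using card_mono[of "{x}" P] by simp
      then show False using Ps[OF P] by simp
    qed
  qed
qed

lemma main_ind:
  "(\<forall>Mk Br. card (V - (Mk \<union> Br)) = n \<longrightarrow> InvB V Ps B Mk Br \<longrightarrow> maker_wins V E k Mk Br False) \<and>
   (\<forall>Mk Br x. card (V - (Mk \<union> insert x Br)) = n \<longrightarrow> InvB V Ps B Mk Br \<longrightarrow> x \<in> V - (Mk \<union> Br)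
      \<longrightarrow> maker_wins V E k Mk (insert x Br) True)"
proof (induction n rule: less_induct)
  case (less n)
  have T: "maker_wins V E k Mk (insert x Br) True"
    if c: "card (V - (Mk \<union> insert x Br)) = n" and inv: "InvB V Ps B Mk Br" and x: "x \<in> V - (Mk \<union> Br)"
    for Mk Br x
  proof (cases "V - (Mk \<union> insert x Br) = {}")
    case True
    then show ?thesis using end_res2[OF inv True] by (intro maker_wins.finished) auto
  next
    case False
    have "\<exists>y \<in> V - (Mk \<union> insert x Br). InvB V Ps B (insert y Mk) (insert x Br)"
    proof (cases "\<exists>P\<in>Ps. x \<in> P \<and> P \<inter> Mk = {}")
      case True
      then obtain P where P: "P \<in> Ps" "x \<in> P" "P \<inter> Mk = {}" by blast
      have PBr: "P \<inter> Br = {}" using inv P by (auto simp: InvB_def)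
      have "card P = 2" using Ps[OF P(1)] by simp
      then obtain a b where ab: "P = {a, b}" "a \<noteq> b" by (meson card_2_iff)
      obtain y where y: "y \<in> P" "y \<noteq> x" using ab by blast
      have yF: "y \<in> V - (Mk \<union> insert x Br)" using y P PBr Ps[OF P(1)] by blast
      have "InvB V Ps B (insert y Mk) (insert x Br)"
        unfolding InvB_def
      proof (intro conjI ballI)
        show "B \<subseteq> insert y Mk" "insert y Mk \<subseteq> V" "insert x Br \<subseteq> V" "insert y Mk \<inter> insert x Br = {}"
          using inv x yF y by (auto simp: InvB_def)
      next
        fix Q assume Q: "Q \<in> Ps"
        show "Q \<inter> insert y Mk \<noteq> {} \<or> Q \<inter> insert x Br = {}"
        proof (cases "Q = P")
          case True then show ?thesis using y by blast
        next
          case False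
          then have "x \<notin> Q" using disj[OF Q P(1)] P(2) by blast
          then show ?thesis using inv Q by (auto simp: InvB_def)
        qed
      qed
      then show ?thesis using yF by blast
    next
      case nP: False
      obtain y where yF: "y \<in> V - (Mk \<union> insert x Br)" using False by blast
      have "InvB V Ps B (insert y Mk) (insert x Br)"
        unfolding InvB_def
      proof (intro conjI ballI)
        show "B \<subseteq> insert y Mk" "insert y Mk \<subseteq> V" "insert x Br \<subseteq> V" "insert y Mk \<inter> insert x Br = {}"
          using inv x yF by (auto simp: InvB_def)
      next
        fix Q assume Q: "Q \<in> Ps"
        show "Q \<inter> insert y Mk \<noteq> {} \<or> Q \<inter> insert x Br = {}"
          using inv Q nP by (auto simp: InvB_def)
      qed
      then show ?thesis using yF by blast
    qed
    then obtain y where yF: "y \<in> V - (Mk \<union> insert x Br)" and inv2: "InvB V Ps B (insert y Mk) (insert x Br)" by blast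
    have "card (V - (insert y Mk \<union> insert x Br)) < n"
      using card_dec[OF fin yF] c by (simp add: insert_commute)
    then have "maker_wins V E k (insert y Mk) (insert x Br) False" using less inv2 by blast
    then show ?thesis using yF by (intro maker_wins.maker_move) auto
  qed
  have F: "maker_wins V E k Mk Br False"
    if c: "card (V - (Mk \<union> Br)) = n" and inv: "InvB V Ps B Mk Br" for Mk Br
  proof (cases "V - (Mk \<union> Br) = {}")
    case True
    then show ?thesis using end_res[OF inv True] by (intro maker_wins.finished) auto
  next
    case False
    show ?thesis
    proof (rule maker_wins.breaker_move)
      show "V - (Mk \<union> Br) \<noteq> {}" by fact
      show "\<forall>v\<in>V - (Mk \<union> Br). maker_wins V E k Mk (insert v Br) True"
      proof
        fix v assume v: "v \<in> V - (Mk \<union> Br)"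
        have "card (V - (Mk \<union> insert v Br)) < n"
          using card_dec[OF fin v] c by simp
        then show "maker_wins V E k Mk (insert v Br) True"
          using less.IH[of "card (V - (Mk \<union> insert v Br))"] inv v by blast
      qed
    qed
  qed
  show ?case using T F by blast
qed

lemma maker_second: "InvB V Ps B Mk Br \<Longrightarrow> maker_wins V E k Mk Br False"
  using main_ind by blast

lemma maker_first_any: assumes inv: "InvB V Ps B Mk Br" shows "maker_wins V E k Mk Br True"
proof (cases "V - (Mk \<union> Br) = {}")
  case True
  then show ?thesis using end_res[OF inv True] by (intro maker_wins.finished) auto
next
  case False
  then obtain y where y: "y \<in> V - (Mk \<union> Br)" by blast
  have "InvB V Ps B (insert y Mk) Br" using inv y by (auto simp: InvB_def)
  then show ?thesis using maker_second y by (intro maker_wins.maker_move) auto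
qed

end

lemma breaker_gen:
  assumes end1: "\<And>Mk Br. I Mk Br \<Longrightarrow> V - (Mk \<union> Br) = {} \<Longrightarrow> \<not> dist_k_resolving V E k Mk"
    and step: "\<And>Mk Br v. I Mk Br \<Longrightarrow> v \<in> V - (Mk \<union> Br) \<Longrightarrow>
       (V - (insert v Mk \<union> Br) = {} \<longrightarrow> \<not> dist_k_resolving V E k (insert v Mk)) \<and>
       (V - (insert v Mk \<union> Br) \<noteq> {} \<longrightarrow> (\<exists>w \<in> V - (insert v Mk \<union> Br). I (insert v Mk) (insert w Br)))"
    and mw: "maker_wins V E k Mk Br mt"
  shows "(mt \<longrightarrow> \<not> I Mk Br) \<and> (\<not> mt \<longrightarrow> \<not> ((V - (Mk \<union> Br) = {} \<longrightarrow> \<not> dist_k_resolving V E k Mk) \<and>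
       (V - (Mk \<union> Br) \<noteq> {} \<longrightarrow> (\<exists>w \<in> V - (Mk \<union> Br). I Mk (insert w Br)))))"
  using mw
proof (induction rule: maker_wins.induct)
  case (finished Mk Br mt)
  then show ?case using end1 by blast
next
  case (maker_move v Mk Br)
  then show ?case using step by blast
next
  case (breaker_move Mk Br)
  then show ?case by blast
qed

lemma card_disj_le:
  assumes "finite U" "A \<inter> B = {}" shows "card (A \<inter> U) + card (B \<inter> U) \<le> card U"
proof -
  have "card (A \<inter> U) + card (B \<inter> U) = card ((A \<inter> U) \<union> (B \<inter> U))"
    using assms by (subst card_Un_disjoint) auto
  also have "\<dots> \<le> card U" using assms by (intro card_mono) auto
  finally show ?thesis .
qed

lemma card_disj_eq:
  assumes "finite U" "A \<inter> B = {}" "U \<subseteq> A \<union> B" shows "card (A \<inter> U) + card (B \<inter> U) = card U"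
proof -
  have "card (A \<inter> U) + card (B \<inter> U) = card ((A \<inter> U) \<union> (B \<inter> U))"
    using assms by (subst card_Un_disjoint) auto
  also have "(A \<inter> U) \<union> (B \<inter> U) = U" using assms by blast
  finally show ?thesis .
qed

locale bunits =
  fixes V :: "'a set" and E :: "'a \<Rightarrow> 'a \<Rightarrow> bool" and k :: nat
    and U0 :: "'a set" and Us :: "'a set set" and t :: nat
  assumes fin: "finite V" and U0V: "U0 \<subseteq> V"
    and UsV: "\<And>U. U \<in> Us \<Longrightarrow> U \<subseteq> V \<and> card U = 3"
    and Usdisj: "\<And>U U'. U \<in> Us \<Longrightarrow> U' \<in> Us \<Longrightarrow> U \<noteq> U' \<Longrightarrow> U \<inter> U' = {}"
    and U0disj: "\<And>U. U \<in> Us \<Longrightarrow> U \<inter> U0 = {}"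
    and fail: "\<And>Mk. Mk \<subseteq> V \<Longrightarrow> 2 * card (Mk \<inter> U0) \<le> card U0 + 1 \<Longrightarrow>
        t \<le> card {U \<in> Us. card (Mk \<inter> U) \<le> 1} \<Longrightarrow> \<not> dist_k_resolving V E k Mk"
begin

definition sec where "sec Mk Br = {U \<in> Us. 2 \<le> card (Br \<inter> U) \<or> (card (Br \<inter> U) = 1 \<and> Mk \<inter> U = {})}"
definition fr where "fr Mk Br = {U \<in> Us. U \<inter> (Mk \<union> Br) = {}}"

definition I where "I Mk Br \<longleftrightarrow> Mk \<subseteq> V \<and> Br \<subseteq> V \<and> Mk \<inter> Br = {} \<and>
   (card (Mk \<inter> U0) \<le> card (Br \<inter> U0) \<or> (U0 \<subseteq> Mk \<union> Br \<and> card (Mk \<inter> U0) \<le> Suc (card (Br \<inter> U0)))) \<and>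
   t \<le> card (sec Mk Br) + card (fr Mk Br) div 2"

lemma finUs: "finite Us"
proof -
  have "Us \<subseteq> Pow V" using UsV by blast
  moreover have "finite (Pow V)" using fin by simp
  ultimately show ?thesis by (rule finite_subset)
qed

lemma finU: "U \<in> Us \<Longrightarrow> finite U" using UsV[of U] fin by (meson finite_subset)
lemma finU0: "finite U0" using U0V fin by (rule finite_subset)

lemma fin_sec: "finite (sec Mk Br)" unfolding sec_def using finUs by simp
lemma fin_fr: "finite (fr Mk Br)" unfolding fr_def using finUs by simp

lemma card_Br_mono: "U \<in> Us \<Longrightarrow> card (Br \<inter> U) \<le> card (insert w Br \<inter> U)"
  using finU by (intro card_mono) auto

lemma sec_Br: "sec Mk Br \<subseteq> sec Mk (insert w Br)"
proof
  fix U assume U: "U \<in> sec Mk Br"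
  then have UU: "U \<in> Us" by (simp add: sec_def)
  have le: "card (Br \<inter> U) \<le> card (insert w Br \<inter> U)" using card_Br_mono[OF UU] .
  show "U \<in> sec Mk (insert w Br)"
  proof (cases "2 \<le> card (Br \<inter> U)")
    case True then show ?thesis using le UU unfolding sec_def by simp
  next
    case False
    then have "card (Br \<inter> U) = 1" "Mk \<inter> U = {}" using U by (auto simp: sec_def)
    then show ?thesis using le UU unfolding sec_def by auto
  qed
qed

lemma sec_Mk:
  assumes "\<not> (\<exists>U\<in>Us. v \<in> U \<and> card (Br \<inter> U) = 1 \<and> Mk \<inter> U = {})"
  shows "sec Mk Br \<subseteq> sec (insert v Mk) Br"
  using assms unfolding sec_def by auto

lemma fr_Mk: "fr (insert v Mk) Br = {U \<in> fr Mk Br. v \<notin> U}" unfolding fr_def by auto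
lemma fr_Br: "fr Mk (insert w Br) = {U \<in> fr Mk Br. w \<notin> U}" unfolding fr_def by auto

lemma card_drop1:
  assumes "A \<subseteq> Us" shows "card A \<le> Suc (card {U \<in> A. w \<notin> U})"
proof -
  have fA: "finite A" using assms finUs finite_subset by blast
  have c1: "card {U \<in> A. w \<in> U} \<le> Suc 0"
  proof (subst card_le_Suc0_iff_eq)
    show "finite {U \<in> A. w \<in> U}" using fA by simp
    show "\<forall>a\<in>{U \<in> A. w \<in> U}. \<forall>b\<in>{U \<in> A. w \<in> U}. a = b"
      using assms Usdisj by blast
  qed
  have "A = {U \<in> A. w \<notin> U} \<union> {U \<in> A. w \<in> U}" by blast
  then have "card A \<le> card {U \<in> A. w \<notin> U} + card {U \<in> A. w \<in> U}"
    using card_Un_le[of "{U \<in> A. w \<notin> U}" "{U \<in> A. w \<in> U}"] by simp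
  then show ?thesis using c1 by simp
qed

lemma fr_sub: "fr Mk Br \<subseteq> Us" unfolding fr_def by blast

lemma start_fresh:
  assumes U: "U \<in> fr Mk Br" and w: "w \<in> U"
  shows "U \<in> sec Mk (insert w Br)" "U \<notin> sec Mk Br"
proof -
  have UU: "U \<in> Us" and e: "U \<inter> (Mk \<union> Br) = {}" using U by (auto simp: fr_def)
  have "insert w Br \<inter> U = {w}" using e w by blast
  then show "U \<in> sec Mk (insert w Br)" using UU e unfolding sec_def by auto
  have "Br \<inter> U = {}" using e by blast
  then show "U \<notin> sec Mk Br" unfolding sec_def by simp
qed

lemma end_fin:
  assumes inv: "I Mk Br" and v: "v \<in> V - (Mk \<union> Br)" and F: "V - (insert v Mk \<union> Br) = {}"
  shows "\<not> dist_k_resolving V E k (insert v Mk)"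
proof (rule fail)
  have MkV: "Mk \<subseteq> V" and BrV: "Br \<subseteq> V" and dj: "Mk \<inter> Br = {}" using inv by (auto simp: I_def)
  show "insert v Mk \<subseteq> V" using MkV v by blast
  have dj': "insert v Mk \<inter> Br = {}" using dj v by blast
  have eq: "card (insert v Mk \<inter> U0) + card (Br \<inter> U0) = card U0"
    using card_disj_eq[OF finU0 dj'] U0V F by blast
  have le: "card (insert v Mk \<inter> U0) \<le> Suc (card (Br \<inter> U0))"
  proof (cases "v \<in> U0")
    case True
    then have "\<not> U0 \<subseteq> Mk \<union> Br" using v by blast
    then have "card (Mk \<inter> U0) \<le> card (Br \<inter> U0)" using inv by (auto simp: I_def)
    moreover have "insert v Mk \<inter> U0 = insert v (Mk \<inter> U0)" using True by blast
    moreover have "v \<notin> Mk \<inter> U0" using v by blast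
    ultimately show ?thesis using finU0 by simp
  next
    case False
    then have "insert v Mk \<inter> U0 = Mk \<inter> U0" by blast
    then show ?thesis using inv by (auto simp: I_def)
  qed
  show "2 * card (insert v Mk \<inter> U0) \<le> card U0 + 1" using eq le by linarith
  have frE: "fr Mk Br = {}"
  proof (rule ccontr)
    assume "fr Mk Br \<noteq> {}"
    then obtain U where U: "U \<in> Us" "U \<inter> (Mk \<union> Br) = {}" by (auto simp: fr_def)
    then have "U \<subseteq> {v}" using UsV[OF U(1)] F by blast
    then have "card U \<le> 1" using card_mono[of "{v}" U] by simp
    then show False using UsV[OF U(1)] by simp
  qed
  have "t \<le> card (sec Mk Br)" using inv frE by (simp add: I_def)
  also have "\<dots> \<le> card {U \<in> Us. card (insert v Mk \<inter> U) \<le> 1}"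
  proof (rule card_mono)
    show "finite {U \<in> Us. card (insert v Mk \<inter> U) \<le> 1}" using finUs by simp
    show "sec Mk Br \<subseteq> {U \<in> Us. card (insert v Mk \<inter> U) \<le> 1}"
    proof
      fix U assume U: "U \<in> sec Mk Br"
      then have UU: "U \<in> Us" by (simp add: sec_def)
      have c3: "card U = 3" using UsV[OF UU] by simp
      have s: "card (insert v Mk \<inter> U) + card (Br \<inter> U) \<le> 3"
        using card_disj_le[OF finU[OF UU] dj'] c3 by simp
      have "2 \<le> card (Br \<inter> U)"
      proof (rule ccontr)
        assume "\<not> 2 \<le> card (Br \<inter> U)"
        then have b1: "card (Br \<inter> U) = 1" and m0: "Mk \<inter> U = {}" using U by (auto simp: sec_def)
        have "U \<subseteq> insert v (Br \<inter> U)" using m0 F UsV[OF UU] by blast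
        then have "card U \<le> card (insert v (Br \<inter> U))" using finU[OF UU] by (intro card_mono) auto
        also have "\<dots> \<le> Suc (card (Br \<inter> U))" by (simp add: card_insert_le_m1)
        finally show False using b1 c3 by simp
      qed
      then show "U \<in> {U \<in> Us. card (insert v Mk \<inter> U) \<le> 1}" using s UU by simp
    qed
  qed
  finally show "t \<le> card {U \<in> Us. card (insert v Mk \<inter> U) \<le> 1}" .
qed

lemma end_fin0:
  assumes inv: "I Mk Br" and F: "V - (Mk \<union> Br) = {}"
  shows "\<not> dist_k_resolving V E k Mk"
proof (rule fail)
  have MkV: "Mk \<subseteq> V" and BrV: "Br \<subseteq> V" and dj: "Mk \<inter> Br = {}" using inv by (auto simp: I_def)
  show "Mk \<subseteq> V" by fact
  have eq: "card (Mk \<inter> U0) + card (Br \<inter> U0) = card U0"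
    using card_disj_eq[OF finU0 dj] U0V F by blast
  have le: "card (Mk \<inter> U0) \<le> Suc (card (Br \<inter> U0))" using inv by (auto simp: I_def)
  show "2 * card (Mk \<inter> U0) \<le> card U0 + 1" using eq le by linarith
  have frE: "fr Mk Br = {}"
  proof (rule ccontr)
    assume "fr Mk Br \<noteq> {}"
    then obtain U where U: "U \<in> Us" "U \<inter> (Mk \<union> Br) = {}" by (auto simp: fr_def)
    then have "U = {}" using UsV[OF U(1)] F by blast
    then show False using UsV[OF U(1)] by simp
  qed
  have "t \<le> card (sec Mk Br)" using inv frE by (simp add: I_def)
  also have "\<dots> \<le> card {U \<in> Us. card (Mk \<inter> U) \<le> 1}"
  proof (rule card_mono)
    show "finite {U \<in> Us. card (Mk \<inter> U) \<le> 1}" using finUs by simp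
    show "sec Mk Br \<subseteq> {U \<in> Us. card (Mk \<inter> U) \<le> 1}"
    proof
      fix U assume U: "U \<in> sec Mk Br"
      then have UU: "U \<in> Us" by (simp add: sec_def)
      have c3: "card U = 3" using UsV[OF UU] by simp
      have s: "card (Mk \<inter> U) + card (Br \<inter> U) \<le> 3"
        using card_disj_le[OF finU[OF UU] dj] c3 by simp
      have "2 \<le> card (Br \<inter> U)"
      proof (rule ccontr)
        assume "\<not> 2 \<le> card (Br \<inter> U)"
        then have b1: "card (Br \<inter> U) = 1" and m0: "Mk \<inter> U = {}" using U by (auto simp: sec_def)
        have "U \<subseteq> Br \<inter> U" using m0 F UsV[OF UU] by blast
        then have "card U \<le> card (Br \<inter> U)" using finU[OF UU] by (intro card_mono) auto
        then show False using b1 c3 by simp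
      qed
      then show "U \<in> {U \<in> Us. card (Mk \<inter> U) \<le> 1}" using s UU by simp
    qed
  qed
  finally show "t \<le> card {U \<in> Us. card (Mk \<inter> U) \<le> 1}" .
qed

end

context bunits begin

definition U0ok where "U0ok Mk Br \<longleftrightarrow> (card (Mk \<inter> U0) \<le> card (Br \<inter> U0) \<or> (U0 \<subseteq> Mk \<union> Br \<and> card (Mk \<inter> U0) \<le> Suc (card (Br \<inter> U0))))"

lemma I_alt: "I Mk Br \<longleftrightarrow> Mk \<subseteq> V \<and> Br \<subseteq> V \<and> Mk \<inter> Br = {} \<and> U0ok Mk Br \<and> t \<le> card (sec Mk Br) + card (fr Mk Br) div 2"
  unfolding I_def U0ok_def by blast

lemma cardU0_Br: "card (Br \<inter> U0) \<le> card (insert w Br \<inter> U0)"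
  using finU0 by (intro card_mono) auto

lemma U0ok_Br: "U0ok Mk Br \<Longrightarrow> U0ok Mk (insert w Br)"
  unfolding U0ok_def using cardU0_Br[of Br w] by auto

lemma U0ok_notin: "v \<notin> U0 \<Longrightarrow> U0ok Mk Br \<Longrightarrow> U0ok (insert v Mk) Br"
proof -
  assume "v \<notin> U0" "U0ok Mk Br"
  moreover have "insert v Mk \<inter> U0 = Mk \<inter> U0" using \<open>v \<notin> U0\<close> by blast
  ultimately show ?thesis unfolding U0ok_def by auto
qed

lemma step:
  assumes inv: "I Mk Br" and v: "v \<in> V - (Mk \<union> Br)" and F: "V - (insert v Mk \<union> Br) \<noteq> {}"
  shows "\<exists>w \<in> V - (insert v Mk \<union> Br). I (insert v Mk) (insert w Br)"
proof -
  have MkV: "Mk \<subseteq> V" and BrV: "Br \<subseteq> V" and dj: "Mk \<inter> Br = {}" and u0: "U0ok Mk Br"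
    and pot: "t \<le> card (sec Mk Br) + card (fr Mk Br) div 2" using inv by (auto simp: I_alt)
  have basic: "insert v Mk \<subseteq> V \<and> insert w Br \<subseteq> V \<and> insert v Mk \<inter> insert w Br = {}"
    if "w \<in> V - (insert v Mk \<union> Br)" for w
    using that MkV BrV dj v by blast
  show ?thesis
  proof (cases "\<exists>U\<in>Us. v \<in> U \<and> card (Br \<inter> U) = 1 \<and> Mk \<inter> U = {}")
    case True
    then obtain U where U: "U \<in> Us" "v \<in> U" "card (Br \<inter> U) = 1" "Mk \<inter> U = {}" by blast
    have c3: "card U = 3" using UsV[OF U(1)] by simp
    have "card (U - Br) = 2"
    proof -
      have "card (U - Br) = card U - card (U \<inter> Br)" using finU[OF U(1)] by (simp add: card_Diff_subset_Int)
      then show ?thesis using c3 U(3) by (simp add: Int_commute)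
    qed
    then have "card ((U - Br) - {v}) = 1" using v U(2) by (simp add: card_Diff_singleton)
    then obtain w where wU: "w \<in> U" "w \<notin> Br" "w \<noteq> v"
      by (metis (no_types, lifting) DiffE card_1_singletonE insertCI singletonD)
    have wF: "w \<in> V - (insert v Mk \<union> Br)" using wU U(4) UsV[OF U(1)] by blast
    have u0': "U0ok (insert v Mk) (insert w Br)"
    proof -
      have "v \<notin> U0" using U0disj[OF U(1)] U(2) by blast
      then show ?thesis using U0ok_Br U0ok_notin u0 by blast
    qed
    have ssub: "sec Mk Br \<subseteq> sec (insert v Mk) (insert w Br)"
    proof
      fix U' assume U': "U' \<in> sec Mk Br"
      then have U'U: "U' \<in> Us" by (simp add: sec_def)
      show "U' \<in> sec (insert v Mk) (insert w Br)"
      proof (cases "U' = U")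
        case True
        have "insert w Br \<inter> U = insert w (Br \<inter> U)" using wU by blast
        then have "card (insert w Br \<inter> U) = 2" using U(3) wU finU[OF U(1)] by simp
        then show ?thesis using True U(1) by (simp add: sec_def)
      next
        case False
        then have "U' \<inter> U = {}" using Usdisj[OF U'U U(1)] by blast
        then have "insert v Mk \<inter> U' = Mk \<inter> U'" "insert w Br \<inter> U' = Br \<inter> U'" using U(2) wU(1) by blast+
        then show ?thesis using U' unfolding sec_def by (simp only: mem_Collect_eq)
      qed
    qed
    have fsub: "fr Mk Br \<subseteq> fr (insert v Mk) (insert w Br)"
    proof
      fix U' assume U': "U' \<in> fr Mk Br"
      then have U'U: "U' \<in> Us" and e: "U' \<inter> (Mk \<union> Br) = {}" by (auto simp: fr_def)
      have "U' \<noteq> U" using e U(3) by (metis Int_Un_distrib Int_commute Un_empty card.empty zero_neq_one)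
      then have "U' \<inter> U = {}" using Usdisj[OF U'U U(1)] by blast
      then show "U' \<in> fr (insert v Mk) (insert w Br)" using U' U(2) wU(1) by (auto simp: fr_def)
    qed
    have "card (sec Mk Br) \<le> card (sec (insert v Mk) (insert w Br))" using ssub fin_sec by (rule card_mono[rotated])
    moreover have "card (fr Mk Br) \<le> card (fr (insert v Mk) (insert w Br))" using fsub fin_fr by (rule card_mono[rotated])
    ultimately have "t \<le> card (sec (insert v Mk) (insert w Br)) + card (fr (insert v Mk) (insert w Br)) div 2"
      using pot by (meson add_le_mono div_le_mono le_trans)
    then show ?thesis using wF basic[OF wF] u0' by (auto simp: I_alt)
  next
    case nA: False
    have s1: "sec Mk Br \<subseteq> sec (insert v Mk) Br" using sec_Mk[OF nA] .
    show ?thesis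
    proof (cases "v \<in> U0 \<and> (\<exists>w\<in>U0. w \<in> V - (insert v Mk \<union> Br))")
      case True
      then obtain w where vU0: "v \<in> U0" and wU0: "w \<in> U0" and wF: "w \<in> V - (insert v Mk \<union> Br)" by blast
      have nin: "\<And>U. U \<in> Us \<Longrightarrow> v \<notin> U \<and> w \<notin> U" using U0disj vU0 wU0 by blast
      have ssub: "sec Mk Br \<subseteq> sec (insert v Mk) (insert w Br)" using s1 sec_Br by blast
      have feq: "fr (insert v Mk) (insert w Br) = fr Mk Br"
        using nin unfolding fr_Br fr_Mk by (auto simp: fr_def)
      have "card (sec Mk Br) \<le> card (sec (insert v Mk) (insert w Br))" using ssub fin_sec by (rule card_mono[rotated])
      then have p: "t \<le> card (sec (insert v Mk) (insert w Br)) + card (fr (insert v Mk) (insert w Br)) div 2"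
        using pot feq by simp
      have "\<not> U0 \<subseteq> Mk \<union> Br" using vU0 v by blast
      then have le: "card (Mk \<inter> U0) \<le> card (Br \<inter> U0)" using u0 by (auto simp: U0ok_def)
      have "insert v Mk \<inter> U0 = insert v (Mk \<inter> U0)" "insert w Br \<inter> U0 = insert w (Br \<inter> U0)" using vU0 wU0 by blast+
      moreover have "v \<notin> Mk \<inter> U0" "w \<notin> Br \<inter> U0" using v wF by blast+
      ultimately have "card (insert v Mk \<inter> U0) \<le> card (insert w Br \<inter> U0)" using le finU0 by simp
      then have "U0ok (insert v Mk) (insert w Br)" by (simp add: U0ok_def)
      then show ?thesis using wF basic[OF wF] p by (auto simp: I_alt)
    next
      case nB: False
      have u0v: "U0ok (insert v Mk) Br"
      proof (cases "v \<in> U0")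
        case False then show ?thesis using U0ok_notin u0 by blast
      next
        case True
        then have full: "U0 \<subseteq> insert v Mk \<union> Br" using nB U0V by blast
        have "\<not> U0 \<subseteq> Mk \<union> Br" using True v by blast
        then have le: "card (Mk \<inter> U0) \<le> card (Br \<inter> U0)" using u0 by (auto simp: U0ok_def)
        have "insert v Mk \<inter> U0 = insert v (Mk \<inter> U0)" using True by blast
        moreover have "v \<notin> Mk \<inter> U0" using v by blast
        ultimately have "card (insert v Mk \<inter> U0) \<le> Suc (card (Br \<inter> U0))" using le finU0 by simp
        then show ?thesis using full by (simp add: U0ok_def)
      qed
      have f1: "card (fr Mk Br) \<le> Suc (card (fr (insert v Mk) Br))"
        using card_drop1[OF fr_sub, of Mk Br v] unfolding fr_Mk by simp
      show ?thesis
      proof (cases "fr (insert v Mk) Br = {}")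
        case False
        then obtain U where U: "U \<in> fr (insert v Mk) Br" by blast
        then have UU: "U \<in> Us" and e: "U \<inter> (insert v Mk \<union> Br) = {}" by (auto simp: fr_def)
        have "U \<noteq> {}" using UsV[OF UU] by auto
        then obtain w where wU: "w \<in> U" by blast
        have wF: "w \<in> V - (insert v Mk \<union> Br)" using wU e UsV[OF UU] by blast
        have s2: "insert U (sec (insert v Mk) Br) \<subseteq> sec (insert v Mk) (insert w Br)"
          using start_fresh(1)[OF U wU] sec_Br by blast
        have "card (insert U (sec (insert v Mk) Br)) = Suc (card (sec (insert v Mk) Br))"
          using start_fresh(2)[OF U wU] fin_sec by simp
        then have cs: "Suc (card (sec Mk Br)) \<le> card (sec (insert v Mk) (insert w Br))"
          using s2 s1 fin_sec card_mono[OF fin_sec s1] card_mono[OF fin_sec s2] by linarith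
        have f2: "card (fr (insert v Mk) Br) \<le> Suc (card (fr (insert v Mk) (insert w Br)))"
          using card_drop1[OF fr_sub, of "insert v Mk" Br w] unfolding fr_Br by simp
        have "card (fr Mk Br) div 2 \<le> Suc (card (fr (insert v Mk) (insert w Br)) div 2)"
          using f1 f2 by linarith
        then have p: "t \<le> card (sec (insert v Mk) (insert w Br)) + card (fr (insert v Mk) (insert w Br)) div 2"
          using pot cs by linarith
        have "U0ok (insert v Mk) (insert w Br)" using U0ok_Br u0v by blast
        then show ?thesis using wF basic[OF wF] p by (auto simp: I_alt)
      next
        case True
        obtain w where wF: "w \<in> V - (insert v Mk \<union> Br)" using F by blast
        have "card (fr Mk Br) \<le> 1" using f1 True by simp
        then have "card (fr Mk Br) div 2 = 0" by simp
        moreover have "card (sec Mk Br) \<le> card (sec (insert v Mk) (insert w Br))"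
          using s1 sec_Br fin_sec by (meson card_mono subset_trans)
        ultimately have p: "t \<le> card (sec (insert v Mk) (insert w Br)) + card (fr (insert v Mk) (insert w Br)) div 2"
          using pot by linarith
        have "U0ok (insert v Mk) (insert w Br)" using U0ok_Br u0v by blast
        then show ?thesis using wF basic[OF wF] p by (auto simp: I_alt)
      qed
    qed
  qed
qed

theorem breaker_wins:
  "maker_wins V E k Mk Br mt \<Longrightarrow> (mt \<longrightarrow> \<not> I Mk Br) \<and> (\<not> mt \<longrightarrow> \<not> ((V - (Mk \<union> Br) = {} \<longrightarrow> \<not> dist_k_resolving V E k Mk) \<and>
       (V - (Mk \<union> Br) \<noteq> {} \<longrightarrow> (\<exists>w \<in> V - (Mk \<union> Br). I Mk (insert w Br)))))"
  by (rule breaker_gen[of I]) (use end_fin0 end_fin step in blast)+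

lemma start_first: "t \<le> card Us div 2 \<Longrightarrow> \<not> maker_wins V E k {} {} True"
proof -
  assume a: "t \<le> card Us div 2"
  have "sec {} {} = {}" by (simp add: sec_def)
  moreover have "fr {} {} = Us" by (simp add: fr_def)
  ultimately have "I {} {}" using a by (simp add: I_def)
  then show ?thesis using breaker_wins[of "{}" "{}" True] by blast
qed

lemma start_second:
  assumes V: "V \<noteq> {}" and w: "w \<in> V" and I: "I {} {w}"
  shows "\<not> maker_wins V E k {} {} False"
  using breaker_wins[of "{}" "{}" False] V w I by blast

end

definition validP :: "'a set \<Rightarrow> 'a set set \<Rightarrow> bool" where
  "validP V Ps \<longleftrightarrow> (\<forall>P\<in>Ps. P \<subseteq> V \<and> card P = 2) \<and> (\<forall>P\<in>Ps. \<forall>Q\<in>Ps. P \<noteq> Q \<longrightarrow> P \<inter> Q = {})"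

lemma validP_Un:
  assumes "validP V A" "validP V B" "\<And>P Q. P \<in> A \<Longrightarrow> Q \<in> B \<Longrightarrow> P \<inter> Q = {}"
  shows "validP V (A \<union> B)"
  using assms unfolding validP_def by (metis Int_commute Un_iff)

lemma validP_single: "P \<subseteq> V \<Longrightarrow> card P = 2 \<Longrightarrow> validP V {P}"
  unfolding validP_def by simp

lemma validP_empty: "validP V {}" unfolding validP_def by simp

locale hig5 = hig +
  assumes terpos: "\<And>v. major V E v \<Longrightarrow> ter V E v \<noteq> 0"
begin

lemma Lv_pos: "major V E v \<Longrightarrow> card (Lv V E v) \<ge> 1"
  using terpos ter_eq by fastforce

definition PM2 where "PM2 = {Lv V E w | w. major V E w \<and> card (Lv V E w) = 2}"
definition PM1 where "PM1 = {insert w (Lv V E w) | w. major V E w \<and> card (Lv V E w) = 1}"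

lemma Lv_inj: "major V E a \<Longrightarrow> Lv V E a = Lv V E b \<Longrightarrow> a = b"
proof -
  assume a: "major V E a" "Lv V E a = Lv V E b"
  obtain x where "x \<in> Lv V E a" using Lv_pos[OF a(1)] by (metis card.empty ex_in_conv not_one_le_zero)
  then show "a = b" using a(2) Lv_disj by metis
qed

lemma ins_inj: "major V E a \<Longrightarrow> major V E b \<Longrightarrow> insert a (Lv V E a) = insert b (Lv V E b) \<Longrightarrow> a = b"
  using major_notin_Lv by blast

lemma card_ins: "major V E a \<Longrightarrow> card (insert a (Lv V E a)) = Suc (card (Lv V E a))"
  using major_notin_Lv Lv_fin by simp

lemma valid_base: "validP V (PM2 \<union> PM1)"
proof (rule validP_Un)
  have a1: "\<forall>P\<in>PM2. P \<subseteq> V \<and> card P = 2" using Lv_sub unfolding PM2_def by auto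
  have a2: "\<forall>P\<in>PM2. \<forall>Q\<in>PM2. P \<noteq> Q \<longrightarrow> P \<inter> Q = {}" using Lv_disj unfolding PM2_def by blast
  show "validP V PM2" unfolding validP_def using a1 a2 by blast
  have b1: "\<forall>P\<in>PM1. P \<subseteq> V \<and> card P = 2" using Lv_sub card_ins major_V unfolding PM1_def by auto
  have b2: "\<forall>P\<in>PM1. \<forall>Q\<in>PM1. P \<noteq> Q \<longrightarrow> P \<inter> Q = {}"
  proof (intro ballI impI)
    fix P Q assume "P \<in> PM1" "Q \<in> PM1" "P \<noteq> Q"
    then obtain a b where ab: "P = insert a (Lv V E a)" "Q = insert b (Lv V E b)" "major V E a" "major V E b" "a \<noteq> b"
      unfolding PM1_def by blast
    show "P \<inter> Q = {}" using ab Lv_disj major_notin_Lv by blast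
  qed
  show "validP V PM1" unfolding validP_def using b1 b2 by blast
next
  fix P Q assume "P \<in> PM2" "Q \<in> PM1"
  then obtain a b where ab: "P = Lv V E a" "Q = insert b (Lv V E b)" "major V E a" "major V E b"
    "card (Lv V E a) = 2" "card (Lv V E b) = 1" unfolding PM2_def PM1_def by blast
  then have "a \<noteq> b" by auto
  then show "P \<inter> Q = {}" using ab Lv_disj major_notin_Lv by blast
qed

lemma CC_suff:
  assumes S: "\<And>v. major V E v \<Longrightarrow> card (Lv V E v) \<le> 3"
    and c1: "\<And>v. major V E v \<Longrightarrow> card (Lv V E v) = 1 \<Longrightarrow> insert v (Lv V E v) \<inter> S \<noteq> {}"
    and c2: "\<And>v. major V E v \<Longrightarrow> card (Lv V E v) = 2 \<Longrightarrow> Lv V E v \<inter> S \<noteq> {}"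
    and c3: "\<And>v. major V E v \<Longrightarrow> card (Lv V E v) = 3 \<Longrightarrow> \<exists>a \<in> Lv V E v \<inter> S. (Lv V E v - {a}) \<inter> S \<noteq> {}"
  shows "CC V E S"
  unfolding CC_def
proof (intro allI impI conjI)
  fix v assume mv: "major V E v"
  let ?L = "Lv V E v"
  have fL: "finite ?L" using Lv_fin .
  have cases: "card ?L = 1 \<or> card ?L = 2 \<or> card ?L = 3" using S[OF mv] Lv_pos[OF mv] by linarith
  have cd: "card (?L - S) = card ?L - card (?L \<inter> S)" using fL by (simp add: card_Diff_subset_Int Int_commute)
  show "card (?L - S) \<le> 1"
  proof -
    { assume "card ?L = 1" then have ?thesis using cd by simp }
    moreover
    { assume a: "card ?L = 2"
      then have "?L \<inter> S \<noteq> {}" using c2[OF mv] by simp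
      then have "card (?L \<inter> S) \<ge> 1" using fL by (simp add: card_gt_0_iff Suc_leI)
      then have ?thesis using cd a by simp }
    moreover
    { assume a: "card ?L = 3"
      then obtain x y where xy: "x \<in> ?L \<inter> S" "y \<in> (?L - {x}) \<inter> S" using c3[OF mv] by blast
      then have "{x, y} \<subseteq> ?L \<inter> S" by blast
      moreover have "card {x, y} = 2" using xy by auto
      ultimately have "card (?L \<inter> S) \<ge> 2" using fL by (metis card_mono finite_Int)
      then have ?thesis using cd a by simp }
    ultimately show ?thesis using cases by blast
  qed
  show "v \<in> S \<or> ?L \<inter> S \<noteq> {}"
    using cases c1[OF mv] c2[OF mv] c3[OF mv] by blast
qed

lemma Eok_suff:
  assumes cc: "CC V E S"
    and c1: "\<forall>v. major V E v \<longrightarrow> card (Lv V E v) = 1 \<longrightarrow> insert v (Lv V E v) \<inter> S \<noteq> {}"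
    and one: "\<forall>v w. major V E v \<longrightarrow> major V E w \<longrightarrow> card (Lv V E v) \<ge> 2 \<longrightarrow> card (Lv V E w) \<ge> 2
       \<longrightarrow> v \<notin> S \<longrightarrow> w \<notin> S \<longrightarrow> v = w"
  shows "\<And>x y v w. major V E v \<Longrightarrow> major V E w \<Longrightarrow> x \<in> Lv V E v \<Longrightarrow> y \<in> Lv V E w \<Longrightarrow>
      x \<notin> S \<Longrightarrow> y \<notin> S \<Longrightarrow> v \<notin> S \<Longrightarrow> w \<notin> S \<Longrightarrow> x = y"
proof -
  fix x y v w
  assume a: "major V E v" "major V E w" "x \<in> Lv V E v" "y \<in> Lv V E w" "x \<notin> S" "y \<notin> S" "v \<notin> S" "w \<notin> S"
  have ge2: "card (Lv V E u) \<ge> 2" if "major V E u" "z \<in> Lv V E u" "z \<notin> S" "u \<notin> S" for u z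
  proof (rule ccontr)
    assume "\<not> card (Lv V E u) \<ge> 2"
    then have c: "card (Lv V E u) = 1" using Lv_pos[OF that(1)] by simp
    then obtain l where "Lv V E u = {l}" by (rule card_1_singletonE)
    then show False using c1 that c by auto
  qed
  have "v = w" using one a(1,2) ge2[OF a(1,3,5,7)] ge2[OF a(2,4,6,8)] a(7,8) by blast
  then show "x = y" using CC_leaves[OF cc a(1) a(3)] a by blast
qed

end

context hig5 begin

lemma maker_pairs:
  assumes valid: "validP V Ps" and BV: "B \<subseteq> V"
    and suff: "\<forall>S. B \<subseteq> S \<longrightarrow> S \<subseteq> V \<longrightarrow> (\<forall>P\<in>Ps. P \<inter> S \<noteq> {}) \<longrightarrow> dist_k_resolving V E k S"
  shows "maker_wins V E k B {} False" "B = {} \<Longrightarrow> maker_wins V E k {} {} True"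
    "B = {a} \<Longrightarrow> maker_wins V E k {} {} True"
proof -
  interpret pairing V E k Ps B
  proof
    show "finite V" using finV .
    show "\<And>P. P \<in> Ps \<Longrightarrow> P \<subseteq> V \<and> card P = 2" using valid unfolding validP_def by blast
    show "\<And>P Q. P \<in> Ps \<Longrightarrow> Q \<in> Ps \<Longrightarrow> P \<noteq> Q \<Longrightarrow> P \<inter> Q = {}" using valid unfolding validP_def by blast
    show "\<And>S. B \<subseteq> S \<Longrightarrow> S \<subseteq> V \<Longrightarrow> \<forall>P\<in>Ps. P \<inter> S \<noteq> {} \<Longrightarrow> dist_k_resolving V E k S" using suff by blast
  qed
  have inv: "InvB V Ps B B {}" using BV unfolding InvB_def by blast
  show mw: "maker_wins V E k B {} False" using maker_second[OF inv] .
  show "B = {} \<Longrightarrow> maker_wins V E k {} {} True" using maker_first_any inv by blast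
  show "B = {a} \<Longrightarrow> maker_wins V E k {} {} True"
  proof -
    assume B: "B = {a}"
    then have "a \<in> V - ({} \<union> {})" using BV by blast
    moreover have "maker_wins V E k (insert a {}) {} False" using mw B by simp
    ultimately show ?thesis by (rule maker_wins.maker_move)
  qed
qed

lemma hit_Un: "\<forall>P\<in>A \<union> B. P \<inter> S \<noteq> {} \<Longrightarrow> (\<forall>P\<in>A. P \<inter> S \<noteq> {}) \<and> (\<forall>P\<in>B. P \<inter> S \<noteq> {})" by blast

lemma hit_base:
  assumes "\<forall>P\<in>PM2 \<union> PM1. P \<inter> S \<noteq> {}"
  shows "\<And>v. major V E v \<Longrightarrow> card (Lv V E v) = 1 \<Longrightarrow> insert v (Lv V E v) \<inter> S \<noteq> {}"
    "\<And>v. major V E v \<Longrightarrow> card (Lv V E v) = 2 \<Longrightarrow> Lv V E v \<inter> S \<noteq> {}"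
proof -
  fix v assume "major V E v" "card (Lv V E v) = 1"
  then have "insert v (Lv V E v) \<in> PM2 \<union> PM1" unfolding PM1_def by blast
  then show "insert v (Lv V E v) \<inter> S \<noteq> {}" using assms by blast
next
  fix v assume "major V E v" "card (Lv V E v) = 2"
  then have "Lv V E v \<in> PM2 \<union> PM1" unfolding PM2_def by blast
  then show "Lv V E v \<inter> S \<noteq> {}" using assms by blast
qed

lemma suff_k2:
  assumes k: "k \<ge> 2" and le3: "\<forall>v. major V E v \<longrightarrow> card (Lv V E v) \<le> 3"
    and h3: "\<forall>S. B \<subseteq> S \<longrightarrow> (\<forall>P\<in>Q. P \<inter> S \<noteq> {}) \<longrightarrow>
        (\<forall>v. major V E v \<longrightarrow> card (Lv V E v) = 3 \<longrightarrow> (\<exists>a\<in>Lv V E v \<inter> S. (Lv V E v - {a}) \<inter> S \<noteq> {}))"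
  shows "\<forall>S. B \<subseteq> S \<longrightarrow> S \<subseteq> V \<longrightarrow> (\<forall>P\<in>(PM2 \<union> PM1) \<union> Q. P \<inter> S \<noteq> {}) \<longrightarrow> dist_k_resolving V E k S"
proof (intro allI impI)
  fix S assume BS: "B \<subseteq> S" and SV: "S \<subseteq> V" and hit: "\<forall>P\<in>(PM2 \<union> PM1) \<union> Q. P \<inter> S \<noteq> {}"
  have hb: "\<forall>P\<in>PM2 \<union> PM1. P \<inter> S \<noteq> {}" and hq: "\<forall>P\<in>Q. P \<inter> S \<noteq> {}" using hit by auto
  have c3: "\<forall>v. major V E v \<longrightarrow> card (Lv V E v) = 3 \<longrightarrow> (\<exists>a\<in>Lv V E v \<inter> S. (Lv V E v - {a}) \<inter> S \<noteq> {})"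
    using h3 BS hq by blast
  have "CC V E S"
  proof (rule CC_suff)
    show "\<And>v. major V E v \<Longrightarrow> card (Lv V E v) \<le> 3" using le3 by blast
    show "\<And>v. major V E v \<Longrightarrow> card (Lv V E v) = 1 \<Longrightarrow> insert v (Lv V E v) \<inter> S \<noteq> {}" using hit_base(1)[OF hb] by blast
    show "\<And>v. major V E v \<Longrightarrow> card (Lv V E v) = 2 \<Longrightarrow> Lv V E v \<inter> S \<noteq> {}" using hit_base(2)[OF hb] by blast
    show "\<And>v. major V E v \<Longrightarrow> card (Lv V E v) = 3 \<Longrightarrow> \<exists>a\<in>Lv V E v \<inter> S. (Lv V E v - {a}) \<inter> S \<noteq> {}" using c3 by blast
  qed
  then show "dist_k_resolving V E k S" using res_k2[OF k SV] by blast
qed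

lemma suff_k1:
  assumes k: "k = 1" and le3: "\<forall>v. major V E v \<longrightarrow> card (Lv V E v) \<le> 3"
    and h3: "\<forall>S. B \<subseteq> S \<longrightarrow> (\<forall>P\<in>Q. P \<inter> S \<noteq> {}) \<longrightarrow>
        (\<forall>v. major V E v \<longrightarrow> card (Lv V E v) = 3 \<longrightarrow> (\<exists>a\<in>Lv V E v \<inter> S. (Lv V E v - {a}) \<inter> S \<noteq> {}))"
    and hone: "\<forall>S. B \<subseteq> S \<longrightarrow> (\<forall>P\<in>Q. P \<inter> S \<noteq> {}) \<longrightarrow>
        (\<forall>v w. major V E v \<longrightarrow> major V E w \<longrightarrow> card (Lv V E v) \<ge> 2 \<longrightarrow> card (Lv V E w) \<ge> 2
       \<longrightarrow> v \<notin> S \<longrightarrow> w \<notin> S \<longrightarrow> v = w)"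
  shows "\<forall>S. B \<subseteq> S \<longrightarrow> S \<subseteq> V \<longrightarrow> (\<forall>P\<in>(PM2 \<union> PM1) \<union> Q. P \<inter> S \<noteq> {}) \<longrightarrow> dist_k_resolving V E k S"
proof (intro allI impI)
  fix S assume BS: "B \<subseteq> S" and SV: "S \<subseteq> V" and hit: "\<forall>P\<in>(PM2 \<union> PM1) \<union> Q. P \<inter> S \<noteq> {}"
  have hb: "\<forall>P\<in>PM2 \<union> PM1. P \<inter> S \<noteq> {}" and hq: "\<forall>P\<in>Q. P \<inter> S \<noteq> {}" using hit by auto
  have c3: "\<forall>v. major V E v \<longrightarrow> card (Lv V E v) = 3 \<longrightarrow> (\<exists>a\<in>Lv V E v \<inter> S. (Lv V E v - {a}) \<inter> S \<noteq> {})"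
    using h3 BS hq by blast
  have cc: "CC V E S"
  proof (rule CC_suff)
    show "\<And>v. major V E v \<Longrightarrow> card (Lv V E v) \<le> 3" using le3 by blast
    show "\<And>v. major V E v \<Longrightarrow> card (Lv V E v) = 1 \<Longrightarrow> insert v (Lv V E v) \<inter> S \<noteq> {}" using hit_base(1)[OF hb] by blast
    show "\<And>v. major V E v \<Longrightarrow> card (Lv V E v) = 2 \<Longrightarrow> Lv V E v \<inter> S \<noteq> {}" using hit_base(2)[OF hb] by blast
    show "\<And>v. major V E v \<Longrightarrow> card (Lv V E v) = 3 \<Longrightarrow> \<exists>a\<in>Lv V E v \<inter> S. (Lv V E v - {a}) \<inter> S \<noteq> {}" using c3 by blast
  qed
  have one: "\<forall>v w. major V E v \<longrightarrow> major V E w \<longrightarrow> card (Lv V E v) \<ge> 2 \<longrightarrow> card (Lv V E w) \<ge> 2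
       \<longrightarrow> v \<notin> S \<longrightarrow> w \<notin> S \<longrightarrow> v = w" using hone BS hq by blast
  have c1: "\<forall>v. major V E v \<longrightarrow> card (Lv V E v) = 1 \<longrightarrow> insert v (Lv V E v) \<inter> S \<noteq> {}"
    using hit_base(1)[OF hb] by blast
  have eok: "\<forall>x y v w. major V E v \<longrightarrow> major V E w \<longrightarrow> x \<in> Lv V E v \<longrightarrow> y \<in> Lv V E w \<longrightarrow>
      x \<notin> S \<longrightarrow> y \<notin> S \<longrightarrow> v \<notin> S \<longrightarrow> w \<notin> S \<longrightarrow> x = y"
    using Eok_suff[OF cc c1 one] by blast
  show "dist_k_resolving V E k S" using res_k1[OF k SV cc eok] by blast
qed

lemma miss:
  assumes mv: "major V E a" and c: "card (insert a (Lv V E a) - Mk) \<ge> 2"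
  shows "(\<exists>x y. x \<in> Lv V E a \<and> y \<in> Lv V E a \<and> x \<noteq> y \<and> x \<notin> Mk \<and> y \<notin> Mk) \<or>
         (a \<notin> Mk \<and> (\<exists>x \<in> Lv V E a. x \<notin> Mk))"
proof (cases "a \<in> Mk")
  case True
  then have "insert a (Lv V E a) - Mk = Lv V E a - Mk" by blast
  then have "card (Lv V E a - Mk) \<ge> 2" using c by simp
  then have "\<not> card (Lv V E a - Mk) \<le> Suc 0" by simp
  then have "\<not> (\<forall>x\<in>Lv V E a - Mk. \<forall>y\<in>Lv V E a - Mk. x = y)"
    using card_le_Suc0_iff_eq[of "Lv V E a - Mk"] Lv_fin by simp
  then obtain x y where "x \<in> Lv V E a - Mk" "y \<in> Lv V E a - Mk" "x \<noteq> y" by blast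
  then show ?thesis by blast
next
  case False
  have "insert a (Lv V E a) - Mk \<noteq> {a}"
  proof
    assume "insert a (Lv V E a) - Mk = {a}"
    then show False using c by simp
  qed
  then have "\<exists>x \<in> Lv V E a. x \<notin> Mk" using False by blast
  then show ?thesis using False by blast
qed

lemma fail_k1:
  assumes k: "k = 1" and MkV: "Mk \<subseteq> V" and ma: "major V E a" and mb: "major V E b" and ab: "a \<noteq> b"
    and ca: "card (insert a (Lv V E a) - Mk) \<ge> 2" and cb: "card (insert b (Lv V E b) - Mk) \<ge> 2"
  shows "\<not> dist_k_resolving V E k Mk"
proof -
  have tw: "\<not> dist_k_resolving V E k Mk"
    if "major V E u" "x \<in> Lv V E u" "y \<in> Lv V E u" "x \<noteq> y" "x \<notin> Mk" "y \<notin> Mk" for u x y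
    using twins_nonres[OF MkV that] .
  show ?thesis
  proof (cases "\<exists>x y. x \<in> Lv V E a \<and> y \<in> Lv V E a \<and> x \<noteq> y \<and> x \<notin> Mk \<and> y \<notin> Mk")
    case True then show ?thesis using tw[OF ma] by blast
  next
    case Fa: False
    show ?thesis
    proof (cases "\<exists>x y. x \<in> Lv V E b \<and> y \<in> Lv V E b \<and> x \<noteq> y \<and> x \<notin> Mk \<and> y \<notin> Mk")
      case True then show ?thesis using tw[OF mb] by blast
    next
      case Fb: False
      obtain x where x: "x \<in> Lv V E a" "x \<notin> Mk" and aM: "a \<notin> Mk" using miss[OF ma ca] Fa by blast
      obtain y where y: "y \<in> Lv V E b" "y \<notin> Mk" and bM: "b \<notin> Mk" using miss[OF mb cb] Fb by blast
      have xy: "x \<noteq> y" using x y ab Lv_disj by blast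
      have nx: "\<And>z. z \<in> Mk \<Longrightarrow> \<not> E x z" using leaf_uniq[OF Lv_leaf[OF x(1)] Lv_E'[OF x(1)]] aM by blast
      have ny: "\<And>z. z \<in> Mk \<Longrightarrow> \<not> E y z" using leaf_uniq[OF Lv_leaf[OF y(1)] Lv_E'[OF y(1)]] bM by blast
      show ?thesis using empty_nonres[OF k MkV _ _ xy x(2) y(2) nx ny] x(1) y(1) Lv_sub by blast
    qed
  qed
qed

lemma card_miss: "finite U \<Longrightarrow> card (U - Mk) = card U - card (Mk \<inter> U)"
  by (simp add: card_Diff_subset_Int Int_commute)

end

lemma two_of: "finite A \<Longrightarrow> card A \<ge> 2 \<Longrightarrow> \<exists>x y. x \<in> A \<and> y \<in> A \<and> x \<noteq> y"
proof -
  assume a: "finite A" "card A \<ge> 2"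
  then have "\<not> card A \<le> Suc 0" by simp
  then have "\<not> (\<forall>x\<in>A. \<forall>y\<in>A. x = y)" using card_le_Suc0_iff_eq[OF a(1)] by simp
  then show ?thesis by blast
qed

context hig5 begin

lemma twins_card:
  assumes MkV: "Mk \<subseteq> V" and mv: "major V E v" and c: "card (Lv V E v - Mk) \<ge> 2"
  shows "\<not> dist_k_resolving V E k Mk"
proof -
  obtain x y where "x \<in> Lv V E v - Mk" "y \<in> Lv V E v - Mk" "x \<noteq> y"
    using two_of[OF _ c] Lv_fin by blast
  then show ?thesis using twins_nonres[OF MkV mv] by blast
qed

lemma B_M4:
  assumes mv: "major V E v" and c4: "card (Lv V E v) \<ge> 4"
  shows "\<not> maker_wins V E k {} {} True" "\<not> maker_wins V E k {} {} False"
proof -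
  interpret bunits V E k "Lv V E v" "{}" 0
  proof
    show "finite V" using finV .
    show "Lv V E v \<subseteq> V" using Lv_sub .
  next
    fix Mk assume MkV: "Mk \<subseteq> V" and h: "2 * card (Mk \<inter> Lv V E v) \<le> card (Lv V E v) + 1"
    have "card (Lv V E v - Mk) = card (Lv V E v) - card (Mk \<inter> Lv V E v)"
      using card_miss[OF Lv_fin] .
    then have "card (Lv V E v - Mk) \<ge> 2" using h c4 by linarith
    then show "\<not> dist_k_resolving V E k Mk" using twins_card[OF MkV mv] by blast
  qed auto
  show "\<not> maker_wins V E k {} {} True" using start_first by simp
  have vV: "v \<in> V" using major_V[OF mv] .
  have "I {} {v}" unfolding I_def using vV by simp
  then show "\<not> maker_wins V E k {} {} False" using start_second[OF Vne vV] by blast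
qed

lemma B_M3one:
  assumes mv: "major V E v" and c3: "card (Lv V E v) = 3"
  shows "\<not> maker_wins V E k {} {} False"
proof -
  interpret bunits V E k "{}" "{Lv V E v}" 1
  proof
    show "finite V" using finV .
  next
    fix U assume "U \<in> {Lv V E v}"
    then show "U \<subseteq> V \<and> card U = 3" using Lv_sub c3 by simp
  next
    fix Mk assume MkV: "Mk \<subseteq> V" and h: "1 \<le> card {U \<in> {Lv V E v}. card (Mk \<inter> U) \<le> 1}"
    have "card (Mk \<inter> Lv V E v) \<le> 1"
    proof (rule ccontr)
      assume "\<not> card (Mk \<inter> Lv V E v) \<le> 1"
      then have eq: "{U \<in> {Lv V E v}. card (Mk \<inter> U) \<le> 1} = {}" by auto
      have "card {U \<in> {Lv V E v}. card (Mk \<inter> U) \<le> 1} = 0" by (subst eq) simp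
      then show False using h by linarith
    qed
    moreover have "card (Lv V E v - Mk) = card (Lv V E v) - card (Mk \<inter> Lv V E v)"
      using card_miss[OF Lv_fin] .
    ultimately have "card (Lv V E v - Mk) \<ge> 2" using c3 by linarith
    then show "\<not> dist_k_resolving V E k Mk" using twins_card[OF MkV mv] by blast
  qed auto
  obtain w where w: "w \<in> Lv V E v" using c3 by (metis card.empty ex_in_conv zero_neq_numeral)
  have wV: "w \<in> V" using w Lv_sub by blast
  have "Lv V E v \<in> sec {} {w}" unfolding sec_def using w by simp
  then have "card (sec {} {w}) \<ge> 1" using fin_sec by (metis One_nat_def Suc_leI card_gt_0_iff empty_iff)
  then have "I {} {w}" unfolding I_def using wV by simp
  then show ?thesis using start_second[OF Vne wV] by blast
qed

lemma B_M3two: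
  assumes m1: "major V E v1" and c1: "card (Lv V E v1) = 3"
    and m2: "major V E v2" and c2: "card (Lv V E v2) = 3" and ne: "v1 \<noteq> v2"
  shows "\<not> maker_wins V E k {} {} True"
proof -
  interpret bunits V E k "{}" "{Lv V E v1, Lv V E v2}" 1
  proof
    show "finite V" using finV .
  next
    fix U assume "U \<in> {Lv V E v1, Lv V E v2}"
    then show "U \<subseteq> V \<and> card U = 3" using Lv_sub c1 c2 by auto
  next
    fix U U' assume "U \<in> {Lv V E v1, Lv V E v2}" "U' \<in> {Lv V E v1, Lv V E v2}" "U \<noteq> U'"
    then show "U \<inter> U' = {}" using Lv_disj ne by blast
  next
    fix Mk assume MkV: "Mk \<subseteq> V" and h: "1 \<le> card {U \<in> {Lv V E v1, Lv V E v2}. card (Mk \<inter> U) \<le> 1}"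
    then obtain U where U: "U \<in> {Lv V E v1, Lv V E v2}" "card (Mk \<inter> U) \<le> 1"
      by (metis (no_types, lifting) card.empty empty_Collect_eq not_one_le_zero)
    then obtain v where v: "v = v1 \<or> v = v2" "U = Lv V E v" by blast
    have mv: "major V E v" and c: "card (Lv V E v) = 3" using v m1 m2 c1 c2 by auto
    have "card (Lv V E v - Mk) = card (Lv V E v) - card (Mk \<inter> Lv V E v)"
      using card_miss[OF Lv_fin] .
    then have "card (Lv V E v - Mk) \<ge> 2" using c U v by simp
    then show "\<not> dist_k_resolving V E k Mk" using twins_card[OF MkV mv] by blast
  qed auto
  have "Lv V E v1 \<noteq> Lv V E v2" using Lv_inj[OF m1] ne by blast
  then have "card {Lv V E v1, Lv V E v2} = 2" by simp
  then show ?thesis using start_first by simp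
qed

definition ins where "ins w = insert w (Lv V E w)"

lemma ins_inj_on: "inj_on ins {w. major V E w}"
  unfolding inj_on_def ins_def using ins_inj by blast

lemma units_ok:
  assumes Ws: "Ws \<subseteq> {w. major V E w \<and> card (Lv V E w) = 2}"
  shows "\<And>U. U \<in> ins ` Ws \<Longrightarrow> U \<subseteq> V \<and> card U = 3"
    "\<And>U U'. U \<in> ins ` Ws \<Longrightarrow> U' \<in> ins ` Ws \<Longrightarrow> U \<noteq> U' \<Longrightarrow> U \<inter> U' = {}"
    "card (ins ` Ws) = card Ws"
proof -
  fix U assume "U \<in> ins ` Ws"
  then obtain w where w: "w \<in> Ws" "U = ins w" by blast
  then show "U \<subseteq> V \<and> card U = 3" using Ws card_ins[of w] Lv_sub major_V unfolding ins_def by auto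
next
  fix U U' assume "U \<in> ins ` Ws" "U' \<in> ins ` Ws" "U \<noteq> U'"
  then obtain a b where "a \<in> Ws" "b \<in> Ws" "U = ins a" "U' = ins b" "a \<noteq> b" by blast
  then show "U \<inter> U' = {}" using Ws Lv_disj major_notin_Lv unfolding ins_def by blast
next
  have "Ws \<subseteq> {w. major V E w}" using Ws by blast
  then have "inj_on ins Ws" using ins_inj_on inj_on_subset by blast
  then show "card (ins ` Ws) = card Ws" by (rule card_image)
qed

lemma fail_units:
  assumes k: "k = 1" and Ws: "Ws \<subseteq> {w. major V E w \<and> card (Lv V E w) = 2}" and MkV: "Mk \<subseteq> V"
    and U: "U \<in> ins ` Ws" "card (Mk \<inter> U) \<le> 1"
  shows "\<exists>b. major V E b \<and> card (Lv V E b) = 2 \<and> card (insert b (Lv V E b) - Mk) \<ge> 2 \<and> U = ins b"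
proof -
  obtain b where b: "b \<in> Ws" "U = ins b" using U by blast
  have mb: "major V E b" and cb: "card (Lv V E b) = 2" using b Ws by auto
  have c3: "card U = 3" using b card_ins[OF mb] cb unfolding ins_def by simp
  have "card (U - Mk) = card U - card (Mk \<inter> U)" using card_miss[of U Mk] c3
    by (metis card.infinite zero_neq_numeral)
  then have "card (U - Mk) \<ge> 2" using c3 U(2) by simp
  then show ?thesis using mb cb b unfolding ins_def by blast
qed

lemma B_units:
  assumes k: "k = 1" and Ws: "Ws \<subseteq> {w. major V E w \<and> card (Lv V E w) = 2}"
  shows "card Ws \<ge> 4 \<Longrightarrow> \<not> maker_wins V E k {} {} True"
    "card Ws \<ge> 3 \<Longrightarrow> \<not> maker_wins V E k {} {} False"
proof -
  interpret bunits V E k "{}" "ins ` Ws" 2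
  proof
    show "finite V" using finV .
    show "\<And>U. U \<in> ins ` Ws \<Longrightarrow> U \<subseteq> V \<and> card U = 3" using units_ok[OF Ws] by blast
    show "\<And>U U'. U \<in> ins ` Ws \<Longrightarrow> U' \<in> ins ` Ws \<Longrightarrow> U \<noteq> U' \<Longrightarrow> U \<inter> U' = {}" using units_ok[OF Ws] by blast
  next
    fix Mk assume MkV: "Mk \<subseteq> V" and h: "2 \<le> card {U \<in> ins ` Ws. card (Mk \<inter> U) \<le> 1}"
    have "finite {U \<in> ins ` Ws. card (Mk \<inter> U) \<le> 1}"
    proof -
      have "ins ` Ws \<subseteq> Pow V" using units_ok(1)[OF Ws] by blast
      then have "finite (ins ` Ws)" using finV by (meson finite_Pow_iff finite_subset)
      then show ?thesis by simp
    qed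
    then obtain U1 U2 where U: "U1 \<in> ins ` Ws" "card (Mk \<inter> U1) \<le> 1" "U2 \<in> ins ` Ws" "card (Mk \<inter> U2) \<le> 1" "U1 \<noteq> U2"
      using two_of[OF _ h] by blast
    obtain a where a: "major V E a" "card (insert a (Lv V E a) - Mk) \<ge> 2" "U1 = ins a"
      using fail_units[OF k Ws MkV U(1,2)] by blast
    obtain b where b: "major V E b" "card (insert b (Lv V E b) - Mk) \<ge> 2" "U2 = ins b"
      using fail_units[OF k Ws MkV U(3,4)] by blast
    have "a \<noteq> b" using a b U(5) by blast
    then show "\<not> dist_k_resolving V E k Mk" using fail_k1[OF k MkV a(1) b(1) _ a(2) b(2)] by blast
  qed auto
  show "card Ws \<ge> 4 \<Longrightarrow> \<not> maker_wins V E k {} {} True"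
    using start_first units_ok(3)[OF Ws] by simp
  show "card Ws \<ge> 3 \<Longrightarrow> \<not> maker_wins V E k {} {} False"
  proof -
    assume c: "card Ws \<ge> 3"
    then obtain w where w: "w \<in> Ws" by (metis card.empty ex_in_conv not_numeral_le_zero)
    have mw: "major V E w" using w Ws by blast
    have wV: "w \<in> V" using major_V[OF mw] .
    have "ins w \<in> sec {} {w}" unfolding sec_def ins_def using w by simp
    then have s1: "card (sec {} {w}) \<ge> 1" using fin_sec by (metis One_nat_def Suc_leI card_gt_0_iff empty_iff)
    have "fr {} {w} = ins ` Ws - {ins w}"
    proof
      show "fr {} {w} \<subseteq> ins ` Ws - {ins w}" unfolding fr_def ins_def by auto
      show "ins ` Ws - {ins w} \<subseteq> fr {} {w}"
      proof
        fix U assume U: "U \<in> ins ` Ws - {ins w}"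
        then obtain b where b: "b \<in> Ws" "U = ins b" "b \<noteq> w" by blast
        have "w \<notin> ins b" using b mw major_notin_Lv unfolding ins_def by blast
        then show "U \<in> fr {} {w}" unfolding fr_def using b by auto
      qed
    qed
    moreover have "card (ins ` Ws - {ins w}) = card Ws - 1"
      using units_ok(3)[OF Ws] w by (simp add: card_Diff_singleton finUs)
    ultimately have "card (fr {} {w}) \<ge> 2" using c by simp
    then have "I {} {w}" unfolding I_def using wV s1 by simp
    then show ?thesis using start_second[OF Vne wV] by blast
  qed
qed

lemma B_two:
  assumes k: "k = 1" and m3: "major V E v3" and c3: "card (Lv V E v3) = 3"
    and Ws: "Ws \<subseteq> {w. major V E w \<and> card (Lv V E w) = 2}" and cW: "card Ws \<ge> 2"
  shows "\<not> maker_wins V E k {} {} True"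
proof -
  have U0c: "card (ins v3) = 4" using card_ins[OF m3] c3 unfolding ins_def by simp
  interpret bunits V E k "ins v3" "ins ` Ws" 1
  proof
    show "finite V" using finV .
    show "ins v3 \<subseteq> V" using Lv_sub major_V[OF m3] unfolding ins_def by blast
    show "\<And>U. U \<in> ins ` Ws \<Longrightarrow> U \<subseteq> V \<and> card U = 3" using units_ok[OF Ws] by blast
    show "\<And>U U'. U \<in> ins ` Ws \<Longrightarrow> U' \<in> ins ` Ws \<Longrightarrow> U \<noteq> U' \<Longrightarrow> U \<inter> U' = {}" using units_ok[OF Ws] by blast
  next
    fix U assume "U \<in> ins ` Ws"
    then obtain b where b: "b \<in> Ws" "U = ins b" by blast
    then have "b \<noteq> v3" using Ws c3 by auto
    then show "U \<inter> ins v3 = {}" using b Ws m3 Lv_disj major_notin_Lv unfolding ins_def by blast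
  next
    fix Mk assume MkV: "Mk \<subseteq> V" and h0: "2 * card (Mk \<inter> ins v3) \<le> card (ins v3) + 1"
      and h: "1 \<le> card {U \<in> ins ` Ws. card (Mk \<inter> U) \<le> 1}"
    obtain U where U: "U \<in> ins ` Ws" "card (Mk \<inter> U) \<le> 1"
      using h by (metis (no_types, lifting) card.empty empty_Collect_eq not_one_le_zero)
    obtain b where b: "major V E b" "card (Lv V E b) = 2" "card (insert b (Lv V E b) - Mk) \<ge> 2"
      using fail_units[OF k Ws MkV U] by blast
    have "card (ins v3 - Mk) = card (ins v3) - card (Mk \<inter> ins v3)"
      using card_miss[of "ins v3" Mk] U0c by (metis card.infinite zero_neq_numeral)
    then have "card (insert v3 (Lv V E v3) - Mk) \<ge> 2" using h0 U0c unfolding ins_def by simp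
    moreover have "v3 \<noteq> b" using b c3 by auto
    ultimately show "\<not> dist_k_resolving V E k Mk" using fail_k1[OF k MkV m3 b(1) _ _ b(3)] by blast
  qed
  show ?thesis using start_first units_ok(3)[OF Ws] cW by simp
qed

end

context hig5 begin

lemma maj_pair_disj:
  assumes "major V E x" "major V E y" "card (Lv V E x) \<ge> 2" "card (Lv V E y) \<ge> 2" "P \<in> PM2 \<union> PM1"
  shows "P \<inter> {x, y} = {}"
proof -
  have nx: "x \<notin> Lv V E w" "y \<notin> Lv V E w" for w using assms major_notin_Lv by blast+
  show ?thesis
  proof (cases "P \<in> PM2")
    case True then show ?thesis using nx unfolding PM2_def by blast
  next
    case False
    then obtain w where w: "P = insert w (Lv V E w)" "card (Lv V E w) = 1" using assms(5) unfolding PM1_def by blast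
    then have "w \<noteq> x" "w \<noteq> y" using assms(3,4) by auto
    then show ?thesis using w nx by blast
  qed
qed

lemma L3_disj:
  assumes "major V E v3" "card (Lv V E v3) = 3" "P \<in> PM2 \<union> PM1"
  shows "P \<inter> (Lv V E v3 - {a}) = {}"
proof (cases "P \<in> PM2")
  case True
  then obtain w where w: "P = Lv V E w" "card (Lv V E w) = 2" unfolding PM2_def by blast
  then have "w \<noteq> v3" using assms by auto
  then show ?thesis using w Lv_disj by blast
next
  case False
  then obtain w where w: "P = insert w (Lv V E w)" "card (Lv V E w) = 1" "major V E w" using assms(3) unfolding PM1_def by blast
  then have "w \<noteq> v3" using assms by auto
  then show ?thesis using w Lv_disj major_notin_Lv by blast
qed

lemma h3_of_le2:
  assumes le2: "\<forall>v. major V E v \<longrightarrow> card (Lv V E v) \<le> 2"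
  shows "\<forall>S. B \<subseteq> S \<longrightarrow> (\<forall>P\<in>Q. P \<inter> S \<noteq> {}) \<longrightarrow>
        (\<forall>v. major V E v \<longrightarrow> card (Lv V E v) = 3 \<longrightarrow> (\<exists>b\<in>Lv V E v \<inter> S. (Lv V E v - {b}) \<inter> S \<noteq> {}))"
proof (intro allI impI)
  fix S v assume "major V E v" "card (Lv V E v) = 3"
  then show "\<exists>b\<in>Lv V E v \<inter> S. (Lv V E v - {b}) \<inter> S \<noteq> {}" using le2 by force
qed

lemma le3_of_le2:
  assumes le2: "\<forall>v. major V E v \<longrightarrow> card (Lv V E v) \<le> 2"
  shows "\<forall>v. major V E v \<longrightarrow> card (Lv V E v) \<le> 3"
  using le2 le_trans by fastforce

lemma M_k2:
  assumes k: "k \<ge> 2" and le2: "\<forall>v. major V E v \<longrightarrow> card (Lv V E v) \<le> 2"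
  shows "maker_wins V E k {} {} False" "maker_wins V E k {} {} True"
proof -
  have le3: "\<forall>v. major V E v \<longrightarrow> card (Lv V E v) \<le> 3" using le3_of_le2[OF le2] .
  have h3: "\<forall>S. {} \<subseteq> S \<longrightarrow> (\<forall>P\<in>{}. P \<inter> S \<noteq> {}) \<longrightarrow>
        (\<forall>v. major V E v \<longrightarrow> card (Lv V E v) = 3 \<longrightarrow> (\<exists>a\<in>Lv V E v \<inter> S. (Lv V E v - {a}) \<inter> S \<noteq> {}))"
    using h3_of_le2[OF le2] .
  have suff: "\<forall>S. {} \<subseteq> S \<longrightarrow> S \<subseteq> V \<longrightarrow> (\<forall>P\<in>(PM2 \<union> PM1) \<union> {}. P \<inter> S \<noteq> {}) \<longrightarrow> dist_k_resolving V E k S"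
    using suff_k2[OF k le3 h3] .
  have v: "validP V ((PM2 \<union> PM1) \<union> {})" using valid_base by simp
  have e: "({}::'a set) \<subseteq> V" by simp
  note mp = maker_pairs[OF v e suff]
  show "maker_wins V E k {} {} False" using mp(1) .
  show "maker_wins V E k {} {} True" using mp(2)[OF refl] .
qed

lemma N_k2:
  assumes k: "k \<ge> 2" and le3: "\<forall>v. major V E v \<longrightarrow> card (Lv V E v) \<le> 3"
    and m3: "major V E v3" and c3: "card (Lv V E v3) = 3"
    and u3: "\<forall>v. major V E v \<longrightarrow> card (Lv V E v) = 3 \<longrightarrow> v = v3"
  shows "maker_wins V E k {} {} True"
proof -
  obtain a where a: "a \<in> Lv V E v3" using c3 by (metis card.empty ex_in_conv zero_neq_numeral)
  have ca: "card (Lv V E v3 - {a}) = 2" using a c3 Lv_fin by (simp add: card_Diff_singleton)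
  have v: "validP V ((PM2 \<union> PM1) \<union> {Lv V E v3 - {a}})"
  proof (rule validP_Un[OF valid_base validP_single])
    show "Lv V E v3 - {a} \<subseteq> V" using Lv_sub by blast
    show "card (Lv V E v3 - {a}) = 2" by fact
    show "\<And>P Q. P \<in> PM2 \<union> PM1 \<Longrightarrow> Q \<in> {Lv V E v3 - {a}} \<Longrightarrow> P \<inter> Q = {}" using L3_disj[OF m3 c3] by blast
  qed
  have h3: "\<forall>S. {a} \<subseteq> S \<longrightarrow> (\<forall>P\<in>{Lv V E v3 - {a}}. P \<inter> S \<noteq> {}) \<longrightarrow>
        (\<forall>v. major V E v \<longrightarrow> card (Lv V E v) = 3 \<longrightarrow> (\<exists>b\<in>Lv V E v \<inter> S. (Lv V E v - {b}) \<inter> S \<noteq> {}))"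
  proof (intro allI impI)
    fix S v assume aS: "{a} \<subseteq> S" and h: "\<forall>P\<in>{Lv V E v3 - {a}}. P \<inter> S \<noteq> {}"
      and mv: "major V E v" and cv: "card (Lv V E v) = 3"
    have "v = v3" using u3 mv cv by blast
    moreover have "a \<in> Lv V E v3 \<inter> S" using a aS by blast
    moreover have "(Lv V E v3 - {a}) \<inter> S \<noteq> {}" using h by blast
    ultimately show "\<exists>b\<in>Lv V E v \<inter> S. (Lv V E v - {b}) \<inter> S \<noteq> {}" by blast
  qed
  note suff = suff_k2[OF k le3 h3]
  have aV: "{a} \<subseteq> V" using a Lv_sub by blast
  show ?thesis using maker_pairs(3)[OF v aV suff refl] .
qed

lemma M_k1:
  assumes k: "k = 1" and le2: "\<forall>v. major V E v \<longrightarrow> card (Lv V E v) \<le> 2"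
    and m1: "major V E w1" "card (Lv V E w1) = 2" and m2: "major V E w2" "card (Lv V E w2) = 2" and ne: "w1 \<noteq> w2"
    and only: "\<forall>v. major V E v \<longrightarrow> card (Lv V E v) = 2 \<longrightarrow> v = w1 \<or> v = w2"
  shows "maker_wins V E k {} {} False" "maker_wins V E k {} {} True"
proof -
  have le3: "\<forall>v. major V E v \<longrightarrow> card (Lv V E v) \<le> 3" using le3_of_le2[OF le2] .
  have v: "validP V ((PM2 \<union> PM1) \<union> {{w1, w2}})"
  proof (rule validP_Un[OF valid_base validP_single])
    show "{w1, w2} \<subseteq> V" using m1 m2 major_V by blast
    show "card {w1, w2} = 2" using ne by simp
    show "\<And>P Q. P \<in> PM2 \<union> PM1 \<Longrightarrow> Q \<in> {{w1, w2}} \<Longrightarrow> P \<inter> Q = {}"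
    proof -
      fix P Q assume P: "P \<in> PM2 \<union> PM1" and Q: "Q \<in> {{w1, w2}}"
      have "P \<inter> {w1, w2} = {}" using maj_pair_disj[OF m1(1) m2(1) _ _ P] m1(2) m2(2) by simp
      then show "P \<inter> Q = {}" using Q by simp
    qed
  qed
  have h3: "\<forall>S. {} \<subseteq> S \<longrightarrow> (\<forall>P\<in>{{w1, w2}}. P \<inter> S \<noteq> {}) \<longrightarrow>
        (\<forall>v. major V E v \<longrightarrow> card (Lv V E v) = 3 \<longrightarrow> (\<exists>b\<in>Lv V E v \<inter> S. (Lv V E v - {b}) \<inter> S \<noteq> {}))"
    using h3_of_le2[OF le2] .
  have hone: "\<forall>S. {} \<subseteq> S \<longrightarrow> (\<forall>P\<in>{{w1, w2}}. P \<inter> S \<noteq> {}) \<longrightarrow>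
        (\<forall>v w. major V E v \<longrightarrow> major V E w \<longrightarrow> card (Lv V E v) \<ge> 2 \<longrightarrow> card (Lv V E w) \<ge> 2
       \<longrightarrow> v \<notin> S \<longrightarrow> w \<notin> S \<longrightarrow> v = w)"
  proof (intro allI impI)
    fix S v w assume h: "\<forall>P\<in>{{w1, w2}}. P \<inter> S \<noteq> {}"
      and a: "major V E v" "major V E w" "card (Lv V E v) \<ge> 2" "card (Lv V E w) \<ge> 2" "v \<notin> S" "w \<notin> S"
    have "card (Lv V E v) \<le> 2" "card (Lv V E w) \<le> 2" using le2 a(1,2) by blast+
    then have "card (Lv V E v) = 2" "card (Lv V E w) = 2" using a(3,4) by linarith+
    then have vv: "v = w1 \<or> v = w2" and ww: "w = w1 \<or> w = w2" using only a(1,2) by blast+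
    have "{w1, w2} \<inter> S \<noteq> {}" using h by simp
    then have "w1 \<in> S \<or> w2 \<in> S" by blast
    then show "v = w" using vv ww a(5,6) by metis
  qed
  note suff = suff_k1[OF k le3 h3 hone]
  have e: "({}::'a set) \<subseteq> V" by simp
  note mp = maker_pairs[OF v e suff]
  show "maker_wins V E k {} {} False" using mp(1) .
  show "maker_wins V E k {} {} True" using mp(2)[OF refl] .
qed

lemma N3_k1:
  assumes k: "k = 1" and le2: "\<forall>v. major V E v \<longrightarrow> card (Lv V E v) \<le> 2"
    and m1: "major V E w1" and m2: "major V E w2" "card (Lv V E w2) = 2" and m3: "major V E w3" "card (Lv V E w3) = 2"
    and ne: "w2 \<noteq> w3"
    and only: "\<forall>v. major V E v \<longrightarrow> card (Lv V E v) = 2 \<longrightarrow> v = w1 \<or> v = w2 \<or> v = w3"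
  shows "maker_wins V E k {} {} True"
proof -
  have le3: "\<forall>v. major V E v \<longrightarrow> card (Lv V E v) \<le> 3" using le3_of_le2[OF le2] .
  have v: "validP V ((PM2 \<union> PM1) \<union> {{w2, w3}})"
  proof (rule validP_Un[OF valid_base validP_single])
    show "{w2, w3} \<subseteq> V" using m2 m3 major_V by blast
    show "card {w2, w3} = 2" using ne by simp
    show "\<And>P Q. P \<in> PM2 \<union> PM1 \<Longrightarrow> Q \<in> {{w2, w3}} \<Longrightarrow> P \<inter> Q = {}"
    proof -
      fix P Q assume P: "P \<in> PM2 \<union> PM1" and Q: "Q \<in> {{w2, w3}}"
      have "P \<inter> {w2, w3} = {}" using maj_pair_disj[OF m2(1) m3(1) _ _ P] m2(2) m3(2) by simp
      then show "P \<inter> Q = {}" using Q by simp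
    qed
  qed
  have h3: "\<forall>S. {w1} \<subseteq> S \<longrightarrow> (\<forall>P\<in>{{w2, w3}}. P \<inter> S \<noteq> {}) \<longrightarrow>
        (\<forall>v. major V E v \<longrightarrow> card (Lv V E v) = 3 \<longrightarrow> (\<exists>b\<in>Lv V E v \<inter> S. (Lv V E v - {b}) \<inter> S \<noteq> {}))"
    using h3_of_le2[OF le2] .
  have hone: "\<forall>S. {w1} \<subseteq> S \<longrightarrow> (\<forall>P\<in>{{w2, w3}}. P \<inter> S \<noteq> {}) \<longrightarrow>
        (\<forall>v w. major V E v \<longrightarrow> major V E w \<longrightarrow> card (Lv V E v) \<ge> 2 \<longrightarrow> card (Lv V E w) \<ge> 2
       \<longrightarrow> v \<notin> S \<longrightarrow> w \<notin> S \<longrightarrow> v = w)"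
  proof (intro allI impI)
    fix S v w assume w1S: "{w1} \<subseteq> S" and h: "\<forall>P\<in>{{w2, w3}}. P \<inter> S \<noteq> {}"
      and a: "major V E v" "major V E w" "card (Lv V E v) \<ge> 2" "card (Lv V E w) \<ge> 2" "v \<notin> S" "w \<notin> S"
    have "card (Lv V E v) \<le> 2" "card (Lv V E w) \<le> 2" using le2 a(1,2) by blast+
    then have "card (Lv V E v) = 2" "card (Lv V E w) = 2" using a(3,4) by linarith+
    then have vv: "v = w1 \<or> v = w2 \<or> v = w3" and ww: "w = w1 \<or> w = w2 \<or> w = w3" using only a(1,2) by blast+
    have "{w2, w3} \<inter> S \<noteq> {}" using h by simp
    then have "w2 \<in> S \<or> w3 \<in> S" by blast
    moreover have "w1 \<in> S" using w1S by blast
    ultimately show "v = w" using vv ww a(5,6) by metis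
  qed
  note suff = suff_k1[OF k le3 h3 hone]
  have wV: "{w1} \<subseteq> V" using m1 major_V by blast
  show ?thesis using maker_pairs(3)[OF v wV suff refl] .
qed

lemma N1_k1:
  assumes k: "k = 1" and le3: "\<forall>v. major V E v \<longrightarrow> card (Lv V E v) \<le> 3"
    and m3: "major V E v3" and c3: "card (Lv V E v3) = 3"
    and u3: "\<forall>v. major V E v \<longrightarrow> card (Lv V E v) = 3 \<longrightarrow> v = v3"
    and W: "(\<forall>v. major V E v \<longrightarrow> card (Lv V E v) \<noteq> 2) \<or>
            (\<exists>w. major V E w \<and> card (Lv V E w) = 2 \<and> (\<forall>v. major V E v \<longrightarrow> card (Lv V E v) = 2 \<longrightarrow> v = w))"
  shows "maker_wins V E k {} {} True"
proof -
  obtain a where a: "a \<in> Lv V E v3" using c3 by (metis card.empty ex_in_conv zero_neq_numeral)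
  have ca: "card (Lv V E v3 - {a}) = 2" using a c3 Lv_fin by (simp add: card_Diff_singleton)
  have aV: "{a} \<subseteq> V" using a Lv_sub by blast
  have h3: "\<forall>S. {a} \<subseteq> S \<longrightarrow> (\<forall>P\<in>Q. P \<inter> S \<noteq> {}) \<longrightarrow>
        (\<forall>v. major V E v \<longrightarrow> card (Lv V E v) = 3 \<longrightarrow> (\<exists>b\<in>Lv V E v \<inter> S. (Lv V E v - {b}) \<inter> S \<noteq> {}))"
    if Q: "Lv V E v3 - {a} \<in> Q" for Q
  proof (intro allI impI)
    fix S v assume aS: "{a} \<subseteq> S" and h: "\<forall>P\<in>Q. P \<inter> S \<noteq> {}"
      and mv: "major V E v" and cv: "card (Lv V E v) = 3"
    have "v = v3" using u3 mv cv by blast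
    moreover have "a \<in> Lv V E v3 \<inter> S" using a aS by blast
    moreover have "(Lv V E v3 - {a}) \<inter> S \<noteq> {}" using h Q by blast
    ultimately show "\<exists>b\<in>Lv V E v \<inter> S. (Lv V E v - {b}) \<inter> S \<noteq> {}" by blast
  qed
  from W show ?thesis
  proof
    assume no2: "\<forall>v. major V E v \<longrightarrow> card (Lv V E v) \<noteq> 2"
    have v: "validP V ((PM2 \<union> PM1) \<union> {Lv V E v3 - {a}})"
    proof (rule validP_Un[OF valid_base validP_single])
      show "Lv V E v3 - {a} \<subseteq> V" using Lv_sub by blast
      show "card (Lv V E v3 - {a}) = 2" by fact
      show "\<And>P Q. P \<in> PM2 \<union> PM1 \<Longrightarrow> Q \<in> {Lv V E v3 - {a}} \<Longrightarrow> P \<inter> Q = {}" using L3_disj[OF m3 c3] by blast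
    qed
    have hone: "\<forall>S. {a} \<subseteq> S \<longrightarrow> (\<forall>P\<in>{Lv V E v3 - {a}}. P \<inter> S \<noteq> {}) \<longrightarrow>
        (\<forall>v w. major V E v \<longrightarrow> major V E w \<longrightarrow> card (Lv V E v) \<ge> 2 \<longrightarrow> card (Lv V E w) \<ge> 2
       \<longrightarrow> v \<notin> S \<longrightarrow> w \<notin> S \<longrightarrow> v = w)"
    proof (intro allI impI)
      fix S v w assume b: "major V E v" "major V E w" "card (Lv V E v) \<ge> 2" "card (Lv V E w) \<ge> 2"
      have "card (Lv V E v) \<noteq> 2" "card (Lv V E w) \<noteq> 2" using no2 b(1,2) by blast+
      moreover have "card (Lv V E v) \<le> 3" "card (Lv V E w) \<le> 3" using le3 b(1,2) by blast+
      ultimately have "card (Lv V E v) = 3" "card (Lv V E w) = 3" using b(3,4) by linarith+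
      then show "v = w" using u3 b by metis
    qed
    note suff = suff_k1[OF k le3 h3[of "{Lv V E v3 - {a}}", OF insertI1] hone]
    show ?thesis using maker_pairs(3)[OF v aV suff refl] .
  next
    assume "\<exists>w. major V E w \<and> card (Lv V E w) = 2 \<and> (\<forall>v. major V E v \<longrightarrow> card (Lv V E v) = 2 \<longrightarrow> v = w)"
    then obtain w where w: "major V E w" "card (Lv V E w) = 2" and ow: "\<forall>v. major V E v \<longrightarrow> card (Lv V E v) = 2 \<longrightarrow> v = w" by blast
    have ne: "v3 \<noteq> w" using w c3 by auto
    have vQ0: "validP V ({Lv V E v3 - {a}} \<union> {{v3, w}})"
    proof (rule validP_Un)
      show "validP V {Lv V E v3 - {a}}" using validP_single[of "Lv V E v3 - {a}" V] Lv_sub ca by blast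
      show "validP V {{v3, w}}" using validP_single[of "{v3, w}" V] ne major_V[OF m3] major_V[OF w(1)] by simp
      show "\<And>P Q. P \<in> {Lv V E v3 - {a}} \<Longrightarrow> Q \<in> {{v3, w}} \<Longrightarrow> P \<inter> Q = {}"
        using major_notin_Lv[OF m3] major_notin_Lv[OF w(1)] by blast
    qed
    have "{Lv V E v3 - {a}} \<union> {{v3, w}} = {Lv V E v3 - {a}, {v3, w}}" by blast
    then have vQ: "validP V {Lv V E v3 - {a}, {v3, w}}" using vQ0 by simp
    have v: "validP V ((PM2 \<union> PM1) \<union> {Lv V E v3 - {a}, {v3, w}})"
    proof (rule validP_Un[OF valid_base vQ])
      fix P Q assume P: "P \<in> PM2 \<union> PM1" and Q: "Q \<in> {Lv V E v3 - {a}, {v3, w}}"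
      have d1: "P \<inter> (Lv V E v3 - {a}) = {}" using L3_disj[OF m3 c3 P] .
      have d2: "P \<inter> {v3, w} = {}" using maj_pair_disj[OF m3 w(1) _ _ P] c3 w(2) by simp
      show "P \<inter> Q = {}" using Q d1 d2 by blast
    qed
    have hone: "\<forall>S. {a} \<subseteq> S \<longrightarrow> (\<forall>P\<in>{Lv V E v3 - {a}, {v3, w}}. P \<inter> S \<noteq> {}) \<longrightarrow>
        (\<forall>v w'. major V E v \<longrightarrow> major V E w' \<longrightarrow> card (Lv V E v) \<ge> 2 \<longrightarrow> card (Lv V E w') \<ge> 2
       \<longrightarrow> v \<notin> S \<longrightarrow> w' \<notin> S \<longrightarrow> v = w')"
    proof (intro allI impI)
      fix S v w' assume h: "\<forall>P\<in>{Lv V E v3 - {a}, {v3, w}}. P \<inter> S \<noteq> {}"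
        and b: "major V E v" "major V E w'" "card (Lv V E v) \<ge> 2" "card (Lv V E w') \<ge> 2" "v \<notin> S" "w' \<notin> S"
      have "card (Lv V E v) \<le> 3" "card (Lv V E w') \<le> 3" using le3 b(1,2) by blast+
      then have "card (Lv V E v) = 2 \<or> card (Lv V E v) = 3" "card (Lv V E w') = 2 \<or> card (Lv V E w') = 3"
        using b(3,4) by linarith+
      then have vv: "v = v3 \<or> v = w" and ww: "w' = v3 \<or> w' = w" using u3 ow b(1,2) by blast+
      have "{v3, w} \<inter> S \<noteq> {}" using h by simp
      then have "v3 \<in> S \<or> w \<in> S" by blast
      then show "v = w'" using vv ww b(5,6) by metis
    qed
    note suff = suff_k1[OF k le3 h3[of "{Lv V E v3 - {a}, {v3, w}}", OF insertI1] hone]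
    show ?thesis using maker_pairs(3)[OF v aV suff refl] .
  qed
qed

end

lemma outcome_B: "\<not> maker_wins V E k {} {} True \<Longrightarrow> \<not> maker_wins V E k {} {} False \<Longrightarrow> game_outcome V E k = Outcome_B"
  unfolding game_outcome_def Let_def by simp
lemma outcome_N: "maker_wins V E k {} {} True \<Longrightarrow> \<not> maker_wins V E k {} {} False \<Longrightarrow> game_outcome V E k = Outcome_N"
  unfolding game_outcome_def Let_def by simp
lemma outcome_M: "maker_wins V E k {} {} True \<Longrightarrow> maker_wins V E k {} {} False \<Longrightarrow> game_outcome V E k = Outcome_M"
  unfolding game_outcome_def Let_def by simp

theorem theorem3p9:
  fixes V :: "'a set" and E :: "'a \<Rightarrow> 'a \<Rightarrow> bool" and k :: nat
  assumes "k \<ge> 1"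
    and "tree V E"
    and "\<not> is_path_graph V E"
    and "\<forall>v\<in>V. degree V E v \<noteq> 2"
    and "\<forall>v. major V E v \<longrightarrow> ter V E v \<noteq> 0"
  shows "((card (M_ge4 V E) \<ge> 1 \<or> card (M_i V E 3) \<ge> 2)
           \<or> (M_ge4 V E = {} \<and> card (M_i V E 3) = 1 \<and> card (M_i V E 2) \<ge> 2 \<and> k = 1)
           \<or> (M_ge4 V E = {} \<and> M_i V E 3 = {} \<and> card (M_i V E 2) \<ge> 4 \<and> k = 1)
          \<longrightarrow> game_outcome V E k = Outcome_B)
       \<and> ((M_ge4 V E = {} \<and> card (M_i V E 3) = 1 \<and> card (M_i V E 2) \<in> {0, 1} \<and> k = 1)
           \<or> (M_ge4 V E = {} \<and> card (M_i V E 3) = 1 \<and> k \<ge> 2)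
           \<or> (M_ge4 V E = {} \<and> M_i V E 3 = {} \<and> card (M_i V E 2) = 3 \<and> k = 1)
          \<longrightarrow> game_outcome V E k = Outcome_N)
       \<and> ((M_ge4 V E = {} \<and> M_i V E 3 = {} \<and> card (M_i V E 2) = 2 \<and> k = 1)
           \<or> (M_ge4 V E = {} \<and> M_i V E 3 = {} \<and> M_i V E 2 \<noteq> {} \<and> k \<ge> 2)
          \<longrightarrow> game_outcome V E k = Outcome_M)"
proof -
  interpret G: hig5 V E
  proof
    show "simple_graph V E" "connected_graph V E" using assms(2) unfolding tree_def by auto
    show "\<not> is_path_graph V E" using assms(3) .
    show "\<forall>v\<in>V. degree V E v \<noteq> 2" using assms(4) .
    show "\<And>v. major V E v \<Longrightarrow> ter V E v \<noteq> 0" using assms(5) by blast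
  qed
  have Mi: "M_i V E i = {w. major V E w \<and> card (Lv V E w) = i}" for i
    unfolding M_i_def ext_major_def using G.ter_eq G.terpos by auto
  have M4: "M_ge4 V E = {w. major V E w \<and> card (Lv V E w) \<ge> 4}"
    unfolding M_ge4_def ext_major_def using G.ter_eq G.terpos by auto
  have finM: "finite {w. major V E w \<and> P w}" for P
    using G.finV G.major_V by (metis (no_types, lifting) mem_Collect_eq rev_finite_subset subsetI)
  define M2 where "M2 = {w. major V E w \<and> card (Lv V E w) = 2}"
  define M3 where "M3 = {w. major V E w \<and> card (Lv V E w) = 3}"
  have fM2: "finite M2" unfolding M2_def using finM .
  have fM3: "finite M3" unfolding M3_def using finM .
  have le3: "\<forall>v. major V E v \<longrightarrow> card (Lv V E v) \<le> 3" if "M_ge4 V E = {}"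
    using that unfolding M4 by force
  have le2: "\<forall>v. major V E v \<longrightarrow> card (Lv V E v) \<le> 2" if "M_ge4 V E = {}" "M_i V E 3 = {}"
  proof (intro allI impI)
    fix v assume mv: "major V E v"
    have "card (Lv V E v) \<le> 3" using le3[OF that(1)] mv by blast
    moreover have "card (Lv V E v) \<noteq> 3" using that(2) mv unfolding Mi by blast
    ultimately show "card (Lv V E v) \<le> 2" by linarith
  qed
  have one3: "\<exists>v3. major V E v3 \<and> card (Lv V E v3) = 3 \<and> (\<forall>v. major V E v \<longrightarrow> card (Lv V E v) = 3 \<longrightarrow> v = v3)"
    if "card (M_i V E 3) = 1"
  proof -
    have "card M3 = 1" using that unfolding Mi M3_def by simp
    then obtain v3 where "M3 = {v3}" by (rule card_1_singletonE)
    then show ?thesis unfolding M3_def by blast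
  qed
  have Bpart: "game_outcome V E k = Outcome_B"
    if hyp: "(card (M_ge4 V E) \<ge> 1 \<or> card (M_i V E 3) \<ge> 2)
           \<or> (M_ge4 V E = {} \<and> card (M_i V E 3) = 1 \<and> card (M_i V E 2) \<ge> 2 \<and> k = 1)
           \<or> (M_ge4 V E = {} \<and> M_i V E 3 = {} \<and> card (M_i V E 2) \<ge> 4 \<and> k = 1)"
  proof -
    consider (a) "card (M_ge4 V E) \<ge> 1" | (b) "card (M_i V E 3) \<ge> 2"
      | (c) "M_ge4 V E = {} \<and> card (M_i V E 3) = 1 \<and> card (M_i V E 2) \<ge> 2 \<and> k = 1"
      | (d) "M_ge4 V E = {} \<and> M_i V E 3 = {} \<and> card (M_i V E 2) \<ge> 4 \<and> k = 1"
      using hyp by blast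
    then show ?thesis
    proof cases
      case a
      then have "M_ge4 V E \<noteq> {}" by auto
      then obtain v where "major V E v" "card (Lv V E v) \<ge> 4" unfolding M4 by blast
      then show ?thesis using G.B_M4 outcome_B by metis
    next
      case b
      then have "card M3 \<ge> 2" unfolding Mi M3_def by simp
      then obtain v1 v2 where "v1 \<in> M3" "v2 \<in> M3" "v1 \<noteq> v2" using two_of[OF fM3] by blast
      then have v: "major V E v1" "card (Lv V E v1) = 3" "major V E v2" "card (Lv V E v2) = 3" "v1 \<noteq> v2"
        unfolding M3_def by auto
      show ?thesis using G.B_M3two[OF v] G.B_M3one[OF v(1,2)] outcome_B by metis
    next
      case c
      obtain v3 where v3: "major V E v3" "card (Lv V E v3) = 3" using one3 c by blast
      have "card M2 \<ge> 2" using c unfolding Mi M2_def by simp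
      then have "\<not> maker_wins V E k {} {} True" using G.B_two[where Ws=M2 and k=k, OF _ v3] c unfolding M2_def by blast
      then show ?thesis using G.B_M3one[OF v3] outcome_B by metis
    next
      case d
      have "card M2 \<ge> 4" using d unfolding Mi M2_def by simp
      then show ?thesis using G.B_units[where Ws=M2 and k=k] d outcome_B unfolding M2_def by fastforce
    qed
  qed
  have Npart: "game_outcome V E k = Outcome_N"
    if hyp: "(M_ge4 V E = {} \<and> card (M_i V E 3) = 1 \<and> card (M_i V E 2) \<in> {0, 1} \<and> k = 1)
           \<or> (M_ge4 V E = {} \<and> card (M_i V E 3) = 1 \<and> k \<ge> 2)
           \<or> (M_ge4 V E = {} \<and> M_i V E 3 = {} \<and> card (M_i V E 2) = 3 \<and> k = 1)"
  proof -
    consider (a) "M_ge4 V E = {} \<and> card (M_i V E 3) = 1 \<and> card (M_i V E 2) \<in> {0, 1} \<and> k = 1"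
      | (b) "M_ge4 V E = {} \<and> card (M_i V E 3) = 1 \<and> k \<ge> 2"
      | (c) "M_ge4 V E = {} \<and> M_i V E 3 = {} \<and> card (M_i V E 2) = 3 \<and> k = 1"
      using hyp by blast
    then show ?thesis
    proof cases
      case a
      obtain v3 where v3: "major V E v3" "card (Lv V E v3) = 3" "\<forall>v. major V E v \<longrightarrow> card (Lv V E v) = 3 \<longrightarrow> v = v3"
        using one3 a by blast
      have c2: "card M2 = 0 \<or> card M2 = 1" using a unfolding Mi M2_def by simp
      have W: "(\<forall>v. major V E v \<longrightarrow> card (Lv V E v) \<noteq> 2) \<or>
            (\<exists>w. major V E w \<and> card (Lv V E w) = 2 \<and> (\<forall>v. major V E v \<longrightarrow> card (Lv V E v) = 2 \<longrightarrow> v = w))"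
      proof (cases "card M2 = 0")
        case True
        then have "M2 = {}" using fM2 by simp
        then show ?thesis unfolding M2_def by blast
      next
        case False
        then have "card M2 = 1" using c2 by simp
        then obtain w where "M2 = {w}" by (rule card_1_singletonE)
        then show ?thesis unfolding M2_def by blast
      qed
      have "maker_wins V E k {} {} True" using G.N1_k1[OF _ le3 v3 W] a by blast
      then show ?thesis using G.B_M3one[OF v3(1,2)] outcome_N by metis
    next
      case b
      obtain v3 where v3: "major V E v3" "card (Lv V E v3) = 3" "\<forall>v. major V E v \<longrightarrow> card (Lv V E v) = 3 \<longrightarrow> v = v3"
        using one3 b by blast
      have "maker_wins V E k {} {} True" using G.N_k2[OF _ le3 v3] b by blast
      then show ?thesis using G.B_M3one[OF v3(1,2)] outcome_N by metis
    next
      case c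
      have "card M2 = 3" using c unfolding Mi M2_def by simp
      then obtain w1 w2 w3 where w: "M2 = {w1, w2, w3}" "w1 \<noteq> w2" "w2 \<noteq> w3" "w1 \<noteq> w3"
        using card_3_iff by metis
      have m: "major V E w1" "major V E w2" "card (Lv V E w2) = 2" "major V E w3" "card (Lv V E w3) = 2"
        using w(1) unfolding M2_def by blast+
      have only: "\<forall>v. major V E v \<longrightarrow> card (Lv V E v) = 2 \<longrightarrow> v = w1 \<or> v = w2 \<or> v = w3"
        using w(1) unfolding M2_def by blast
      have l2: "\<forall>v. major V E v \<longrightarrow> card (Lv V E v) \<le> 2" using le2 c by blast
      have "maker_wins V E k {} {} True" using G.N3_k1[OF _ l2 m w(3) only] c by blast
      moreover have "\<not> maker_wins V E k {} {} False" using G.B_units(2)[where Ws=M2 and k=k] c \<open>card M2 = 3\<close> unfolding M2_def by fastforce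
      ultimately show ?thesis using outcome_N by metis
    qed
  qed
  have Mpart: "game_outcome V E k = Outcome_M"
    if hyp: "(M_ge4 V E = {} \<and> M_i V E 3 = {} \<and> card (M_i V E 2) = 2 \<and> k = 1)
           \<or> (M_ge4 V E = {} \<and> M_i V E 3 = {} \<and> M_i V E 2 \<noteq> {} \<and> k \<ge> 2)"
  proof -
    consider (a) "M_ge4 V E = {} \<and> M_i V E 3 = {} \<and> card (M_i V E 2) = 2 \<and> k = 1"
      | (b) "M_ge4 V E = {} \<and> M_i V E 3 = {} \<and> M_i V E 2 \<noteq> {} \<and> k \<ge> 2"
      using hyp by blast
    then show ?thesis
    proof cases
      case a
      have "card M2 = 2" using a unfolding Mi M2_def by simp
      then obtain w1 w2 where w: "M2 = {w1, w2}" "w1 \<noteq> w2" using card_2_iff by metis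
      have m: "major V E w1" "card (Lv V E w1) = 2" "major V E w2" "card (Lv V E w2) = 2"
        using w(1) unfolding M2_def by blast+
      have only: "\<forall>v. major V E v \<longrightarrow> card (Lv V E v) = 2 \<longrightarrow> v = w1 \<or> v = w2"
        using w(1) unfolding M2_def by blast
      have l2: "\<forall>v. major V E v \<longrightarrow> card (Lv V E v) \<le> 2" using le2 a by blast
      show ?thesis using G.M_k1[OF _ l2 m w(2) only] a outcome_M by metis
    next
      case b
      have l2: "\<forall>v. major V E v \<longrightarrow> card (Lv V E v) \<le> 2" using le2 b by blast
      show ?thesis using G.M_k2[OF _ l2] b outcome_M by metis
    qed
  qed
  show ?thesis using Bpart Npart Mpart by blast
qed

end
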